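(* Fix a UL-chain $\mathbf{A}$ and a predicate language $\mathcal{P}$, and let $\mathscr{K}$ be a countable class of finitely generated $\mathbf{A}$-structures for $\mathcal{P}$ (classes being considered up to isomorphism). Then $\mathscr{K}=\mathrm{Age}(\mathbf{A},\mathbf{N})$ for some $\mathbf{A}$-structure $\langle \mathbf{A},\mathbf{N}\rangle$ if and only if $\mathscr{K}$ satisfies the hereditary property (HP) and the joint embedding property (JEP). Furthermore, if $\mathscr{K}$ is a class of $\mathbf{A}$-structures for $\mathcal{P}$ of arbitrary cardinality which satisfies HP and JEP and is closed under unions of chains, then $\mathscr{K}=\mathrm{Age}(\mathbf{A},\mathbf{N})$ for some $\mathbf{A}$-structure $\langle\mathbf{A},\mathbf{N}\rangle$.
   Context: A UL-algebra is a structure $\mathbf{A}=\langle A,\wedge,\vee,\&,\to,\bar 0,\bar 1,\bot,\top\rangle$ such that $\langle A,\wedge,\vee,\bot,\top\rangle$ is a bounded lattice, $\langle A,\&,\bar 1\rangle$ is a commutative monoid, $a\& b\le c$ iff $b\le a\to c$ for all $a,b,c$, and $((a\to b)\wedge\bar 1)\vee((b\to a)\wedge \bar 1)=\bar 1$ for all $a,b$. A UL-chain is a UL-algebra whose lattice order is linear. A predicate language $\mathcal{P}$ consists of predicate symbols and function symbols, each with an arity. An $\mathbf{A}$-structure $\langle\mathbf{A},\mathbf{M}\rangle$ consists of a set $M$, a function $P_{\mathbf{M}}:M^n\to A$ for each $n$-ary predicate symbol $P$, and a function $F_{\mathbf{M}}:M^n\to M$ for each $n$-ary function symbol $F$. Terms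 are evaluated as usual; the truth value of an atomic formula $P(t_1,\dots,t_n)$ is $P_{\mathbf{M}}$ applied to the values of the terms, and quantifier-free formulas (built with the connectives $\wedge,\vee,\&,\to,\bar0,\bar1,\bot,\top$) are evaluated by the corresponding operations of $\mathbf{A}$; $\|\varphi(\vec d)\|^{\mathbf{A}}_{\mathbf{M}}$ denotes this value. $\langle\mathbf{A},\mathbf{M}\rangle$ is a substructure of $\langle\mathbf{A},\mathbf{N}\rangle$ if $M\subseteq N$, $F_{\mathbf{M}}=F_{\mathbf{N}}$ on tuples from $M$ for every function symbol, and every quantifier-free formula has the same value in both structures on every tuple from $M$. An embedding $\langle Id,f\rangle$ of $\langle\mathbf{A},\mathbf{M}\rangle$ into $\langle\mathbf{A},\mathbf{N}\rangle$ is an injective map $f:M\to N$ commuting with all function symbols and preserving the value of every quantifier-free formula (the map on $\mathbf{A}$ is the identity); an isomorphism is a surjective embedding. A structure is finitely generated if its universe is generated by a finite subset under the function symbols. A chain is a sequence of structures each a substructure of the later ones; its union has as universe the union of the universes with the relations and functions inherited. The age $\mathrm{Age}(\mathbf{A},\mathbf{N})$ is the class of all finitely generated substructures of $\langle\mathbf{A},\mathbf{N}\rangle$ and their isomorphic copies (taken up to isomorphism). $\mathscr{K}$ has HP if it is closed under taking substructures; it has JEP if any two members of $\mathscr{K}$ both embed into some common member of $\mathscr{K}$. *)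

theory Defs
  imports Main "HOL-Library.Countable_Set"
begin

record 'a ul_alg =
  carrier :: "'a set"
  meet :: "'a \<Rightarrow> 'a \<Rightarrow> 'a"
  join :: "'a \<Rightarrow> 'a \<Rightarrow> 'a"
  fus  :: "'a \<Rightarrow> 'a \<Rightarrow> 'a"
  imp  :: "'a \<Rightarrow> 'a \<Rightarrow> 'a"
  azero :: 'a
  aone :: 'a
  abot :: 'a
  atop :: 'a

definition ale :: "'a ul_alg \<Rightarrow> 'a \<Rightarrow> 'a \<Rightarrow> bool" where
  "ale A x y \<longleftrightarrow> meet A x y = x"

definition ul_algebra :: "'a ul_alg \<Rightarrow> bool" where
  "ul_algebra A \<longleftrightarrow>
     (\<forall>x\<in>carrier A. \<forall>y\<in>carrier A.
        meet A x y \<in> carrier A \<and> join A x y \<in> carrier A \<and>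
        fus A x y \<in> carrier A \<and> imp A x y \<in> carrier A) \<and>
     azero A \<in> carrier A \<and> aone A \<in> carrier A \<and> abot A \<in> carrier A \<and> atop A \<in> carrier A \<and>
     \<comment> \<open>bounded lattice\<close>
     (\<forall>x\<in>carrier A. \<forall>y\<in>carrier A.
        meet A x y = meet A y x \<and> join A x y = join A y x \<and>
        meet A x (join A x y) = x \<and> join A x (meet A x y) = x) \<and>
     (\<forall>x\<in>carrier A. \<forall>y\<in>carrier A. \<forall>z\<in>carrier A.
        meet A (meet A x y) z = meet A x (meet A y z) \<and>
        join A (join A x y) z = join A x (join A y z)) \<and>
     (\<forall>x\<in>carrier A. meet A x (abot A) = abot A \<and> join A x (atop A) = atop A) \<and>
     \<comment> \<open>commutative monoid\<close>
     (\<forall>x\<in>carrier A. \<forall>y\<in>carrier A. fus A x y = fus A y x) \<and>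
     (\<forall>x\<in>carrier A. \<forall>y\<in>carrier A. \<forall>z\<in>carrier A.
        fus A (fus A x y) z = fus A x (fus A y z)) \<and>
     (\<forall>x\<in>carrier A. fus A x (aone A) = x) \<and>
     \<comment> \<open>residuation\<close>
     (\<forall>a\<in>carrier A. \<forall>b\<in>carrier A. \<forall>c\<in>carrier A.
        ale A (fus A a b) c \<longleftrightarrow> ale A b (imp A a c)) \<and>
     \<comment> \<open>prelinearity\<close>
     (\<forall>a\<in>carrier A. \<forall>b\<in>carrier A.
        join A (meet A (imp A a b) (aone A)) (meet A (imp A b a) (aone A)) = aone A)"

definition ul_chain :: "'a ul_alg \<Rightarrow> bool" where
  "ul_chain A \<longleftrightarrow> ul_algebra A \<and>
     (\<forall>x\<in>carrier A. \<forall>y\<in>carrier A. ale A x y \<or> ale A y x)"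

text \<open>A predicate language is given by the types 'p (predicate symbols) and
  'f (function symbols) with arity functions arp and arf.\<close>

datatype 'f tm = Var nat | Fn 'f "'f tm list"

datatype ('p, 'f) qf =
    Atom 'p "'f tm list"
  | Conj "('p, 'f) qf" "('p, 'f) qf"
  | Disj "('p, 'f) qf" "('p, 'f) qf"
  | Fus "('p, 'f) qf" "('p, 'f) qf"
  | Imp "('p, 'f) qf" "('p, 'f) qf"
  | Zero | One | Bot | Top

fun wf_tm :: "('f \<Rightarrow> nat) \<Rightarrow> 'f tm \<Rightarrow> bool" where
  "wf_tm arf (Var i) = True"
| "wf_tm arf (Fn f ts) = (length ts = arf f \<and> (\<forall>t\<in>set ts. wf_tm arf t))"

fun wf_qf :: "('p \<Rightarrow> nat) \<Rightarrow> ('f \<Rightarrow> nat) \<Rightarrow> ('p, 'f) qf \<Rightarrow> bool" where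
  "wf_qf arp arf (Atom p ts) = (length ts = arp p \<and> (\<forall>t\<in>set ts. wf_tm arf t))"
| "wf_qf arp arf (Conj a b) = (wf_qf arp arf a \<and> wf_qf arp arf b)"
| "wf_qf arp arf (Disj a b) = (wf_qf arp arf a \<and> wf_qf arp arf b)"
| "wf_qf arp arf (Fus a b) = (wf_qf arp arf a \<and> wf_qf arp arf b)"
| "wf_qf arp arf (Imp a b) = (wf_qf arp arf a \<and> wf_qf arp arf b)"
| "wf_qf arp arf Zero = True"
| "wf_qf arp arf One = True"
| "wf_qf arp arf Bot = True"
| "wf_qf arp arf Top = True"

record ('m, 'p, 'f, 'a) struct =
  univ :: "'m set"
  preds :: "'p \<Rightarrow> 'm list \<Rightarrow> 'a"
  funs :: "'f \<Rightarrow> 'm list \<Rightarrow> 'm"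

definition a_structure ::
  "'a ul_alg \<Rightarrow> ('p \<Rightarrow> nat) \<Rightarrow> ('f \<Rightarrow> nat) \<Rightarrow> ('m, 'p, 'f, 'a) struct \<Rightarrow> bool" where
  "a_structure A arp arf M \<longleftrightarrow>
     (\<forall>p xs. length xs = arp p \<and> set xs \<subseteq> univ M \<longrightarrow> preds M p xs \<in> carrier A) \<and>
     (\<forall>f xs. length xs = arf f \<and> set xs \<subseteq> univ M \<longrightarrow> funs M f xs \<in> univ M)"

fun eval_tm :: "('m, 'p, 'f, 'a) struct \<Rightarrow> (nat \<Rightarrow> 'm) \<Rightarrow> 'f tm \<Rightarrow> 'm" where
  "eval_tm M e (Var i) = e i"
| "eval_tm M e (Fn f ts) = funs M f (map (eval_tm M e) ts)"

fun eval_qf :: "'a ul_alg \<Rightarrow> ('m, 'p, 'f, 'a) struct \<Rightarrow> (nat \<Rightarrow> 'm) \<Rightarrow> ('p, 'f) qf \<Rightarrow> 'a" where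
  "eval_qf A M e (Atom p ts) = preds M p (map (eval_tm M e) ts)"
| "eval_qf A M e (Conj a b) = meet A (eval_qf A M e a) (eval_qf A M e b)"
| "eval_qf A M e (Disj a b) = join A (eval_qf A M e a) (eval_qf A M e b)"
| "eval_qf A M e (Fus a b) = fus A (eval_qf A M e a) (eval_qf A M e b)"
| "eval_qf A M e (Imp a b) = imp A (eval_qf A M e a) (eval_qf A M e b)"
| "eval_qf A M e Zero = azero A"
| "eval_qf A M e One = aone A"
| "eval_qf A M e Bot = abot A"
| "eval_qf A M e Top = atop A"

definition substructure ::
  "'a ul_alg \<Rightarrow> ('p \<Rightarrow> nat) \<Rightarrow> ('f \<Rightarrow> nat) \<Rightarrow> ('m, 'p, 'f, 'a) struct \<Rightarrow> ('m, 'p, 'f, 'a) struct \<Rightarrow> bool" where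
  "substructure A arp arf M N \<longleftrightarrow>
     a_structure A arp arf M \<and> a_structure A arp arf N \<and>
     univ M \<subseteq> univ N \<and>
     (\<forall>f xs. length xs = arf f \<and> set xs \<subseteq> univ M \<longrightarrow> funs M f xs = funs N f xs) \<and>
     (\<forall>\<phi> e. wf_qf arp arf \<phi> \<and> range e \<subseteq> univ M \<longrightarrow> eval_qf A M e \<phi> = eval_qf A N e \<phi>)"

definition embedding ::
  "'a ul_alg \<Rightarrow> ('p \<Rightarrow> nat) \<Rightarrow> ('f \<Rightarrow> nat) \<Rightarrow> ('m \<Rightarrow> 'n) \<Rightarrow>
   ('m, 'p, 'f, 'a) struct \<Rightarrow> ('n, 'p, 'f, 'a) struct \<Rightarrow> bool" where
  "embedding A arp arf h M N \<longleftrightarrow>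
     a_structure A arp arf M \<and> a_structure A arp arf N \<and>
     inj_on h (univ M) \<and> h ` univ M \<subseteq> univ N \<and>
     (\<forall>f xs. length xs = arf f \<and> set xs \<subseteq> univ M \<longrightarrow> h (funs M f xs) = funs N f (map h xs)) \<and>
     (\<forall>\<phi> e. wf_qf arp arf \<phi> \<and> range e \<subseteq> univ M \<longrightarrow> eval_qf A N (h \<circ> e) \<phi> = eval_qf A M e \<phi>)"

definition isomorphic ::
  "'a ul_alg \<Rightarrow> ('p \<Rightarrow> nat) \<Rightarrow> ('f \<Rightarrow> nat) \<Rightarrow>
   ('m, 'p, 'f, 'a) struct \<Rightarrow> ('n, 'p, 'f, 'a) struct \<Rightarrow> bool" where
  "isomorphic A arp arf M N \<longleftrightarrow>
     (\<exists>h. embedding A arp arf h M N \<and> h ` univ M = univ N)"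

inductive_set generated :: "('f \<Rightarrow> nat) \<Rightarrow> ('m, 'p, 'f, 'a) struct \<Rightarrow> 'm set \<Rightarrow> 'm set"
  for arf M X where
  gen_base: "x \<in> X \<Longrightarrow> x \<in> generated arf M X"
| gen_fun: "length xs = arf f \<Longrightarrow> (\<forall>x\<in>set xs. x \<in> generated arf M X) \<Longrightarrow> funs M f xs \<in> generated arf M X"

definition fin_gen :: "('f \<Rightarrow> nat) \<Rightarrow> ('m, 'p, 'f, 'a) struct \<Rightarrow> bool" where
  "fin_gen arf M \<longleftrightarrow> (\<exists>X. finite X \<and> X \<subseteq> univ M \<and> univ M = generated arf M X)"

definition age ::
  "'a ul_alg \<Rightarrow> ('p \<Rightarrow> nat) \<Rightarrow> ('f \<Rightarrow> nat) \<Rightarrow> ('n, 'p, 'f, 'a) struct \<Rightarrow> ('n, 'p, 'f, 'a) struct set" where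
  "age A arp arf N = {C. fin_gen arf C \<and> substructure A arp arf C N}"

definition eq_upto_iso ::
  "'a ul_alg \<Rightarrow> ('p \<Rightarrow> nat) \<Rightarrow> ('f \<Rightarrow> nat) \<Rightarrow>
   ('m, 'p, 'f, 'a) struct set \<Rightarrow> ('n, 'p, 'f, 'a) struct set \<Rightarrow> bool" where
  "eq_upto_iso A arp arf K L \<longleftrightarrow>
     (\<forall>B\<in>K. \<exists>C\<in>L. isomorphic A arp arf B C) \<and>
     (\<forall>C\<in>L. \<exists>B\<in>K. isomorphic A arp arf C B)"

definition countable_upto_iso ::
  "'a ul_alg \<Rightarrow> ('p \<Rightarrow> nat) \<Rightarrow> ('f \<Rightarrow> nat) \<Rightarrow> ('m, 'p, 'f, 'a) struct set \<Rightarrow> bool" where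
  "countable_upto_iso A arp arf K \<longleftrightarrow>
     (\<exists>K0 \<subseteq> K. countable K0 \<and> (\<forall>B\<in>K. \<exists>B0\<in>K0. isomorphic A arp arf B B0))"

definition HP ::
  "'a ul_alg \<Rightarrow> ('p \<Rightarrow> nat) \<Rightarrow> ('f \<Rightarrow> nat) \<Rightarrow> ('m, 'p, 'f, 'a) struct set \<Rightarrow> bool" where
  "HP A arp arf K \<longleftrightarrow>
     (\<forall>B\<in>K. \<forall>C. fin_gen arf C \<and> substructure A arp arf C B \<longrightarrow>
        (\<exists>B'\<in>K. isomorphic A arp arf C B'))"

definition JEP ::
  "'a ul_alg \<Rightarrow> ('p \<Rightarrow> nat) \<Rightarrow> ('f \<Rightarrow> nat) \<Rightarrow> ('m, 'p, 'f, 'a) struct set \<Rightarrow> bool" where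
  "JEP A arp arf K \<longleftrightarrow>
     (\<forall>B1\<in>K. \<forall>B2\<in>K. \<exists>D\<in>K. \<exists>h1 h2.
        embedding A arp arf h1 B1 D \<and> embedding A arp arf h2 B2 D)"

definition is_chain ::
  "'a ul_alg \<Rightarrow> ('p \<Rightarrow> nat) \<Rightarrow> ('f \<Rightarrow> nat) \<Rightarrow> ('m, 'p, 'f, 'a) struct set \<Rightarrow> bool" where
  "is_chain A arp arf C \<longleftrightarrow>
     (\<forall>B1\<in>C. \<forall>B2\<in>C. substructure A arp arf B1 B2 \<or> substructure A arp arf B2 B1)"

definition union_chain :: "('m, 'p, 'f, 'a) struct set \<Rightarrow> ('m, 'p, 'f, 'a) struct" where
  "union_chain C =
     \<lparr> univ = (\<Union>B\<in>C. univ B),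
       preds = (\<lambda>p xs. SOME v. \<exists>B\<in>C. set xs \<subseteq> univ B \<and> v = preds B p xs),
       funs = (\<lambda>f xs. SOME y. \<exists>B\<in>C. set xs \<subseteq> univ B \<and> y = funs B f xs) \<rparr>"

definition closed_under_chains ::
  "'a ul_alg \<Rightarrow> ('p \<Rightarrow> nat) \<Rightarrow> ('f \<Rightarrow> nat) \<Rightarrow> ('m, 'p, 'f, 'a) struct set \<Rightarrow> bool" where
  "closed_under_chains A arp arf K \<longleftrightarrow>
     (\<forall>C :: ('m, 'p, 'f, 'a) struct set. C \<noteq> {} \<and> is_chain A arp arf C \<and> (\<forall>B\<in>C. \<exists>B'\<in>K. isomorphic A arp arf B B') \<longrightarrow>
        (\<exists>B'\<in>K. isomorphic A arp arf (union_chain C) B'))"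

end

theory Submission
  imports Defs
begin


lemma astrI:
  assumes "\<And>p xs. length xs = arp p \<Longrightarrow> set xs \<subseteq> univ M \<Longrightarrow> preds M p xs \<in> carrier A"
    "\<And>f xs. length xs = arf f \<Longrightarrow> set xs \<subseteq> univ M \<Longrightarrow> funs M f xs \<in> univ M"
  shows "a_structure A arp arf M"
  using assms unfolding a_structure_def by blast

lemma astr_preds: "a_structure A arp arf M \<Longrightarrow> length xs = arp p \<Longrightarrow> set xs \<subseteq> univ M \<Longrightarrow> preds M p xs \<in> carrier A"
  unfolding a_structure_def by blast

lemma astr_funs: "a_structure A arp arf M \<Longrightarrow> length xs = arf f \<Longrightarrow> set xs \<subseteq> univ M \<Longrightarrow> funs M f xs \<in> univ M"
  unfolding a_structure_def by blast

lemma embI: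
  assumes "a_structure A arp arf M" "a_structure A arp arf N" "inj_on h (univ M)" "h ` univ M \<subseteq> univ N"
    "\<And>f xs. length xs = arf f \<Longrightarrow> set xs \<subseteq> univ M \<Longrightarrow> h (funs M f xs) = funs N f (map h xs)"
    "\<And>\<phi> e. wf_qf arp arf \<phi> \<Longrightarrow> range e \<subseteq> univ M \<Longrightarrow> eval_qf A N (h \<circ> e) \<phi> = eval_qf A M e \<phi>"
  shows "embedding A arp arf h M N"
  using assms unfolding embedding_def by blast

lemma emb_astr1: "embedding A arp arf h M N \<Longrightarrow> a_structure A arp arf M"
  unfolding embedding_def by blast
lemma emb_astr2: "embedding A arp arf h M N \<Longrightarrow> a_structure A arp arf N"
  unfolding embedding_def by blast
lemma emb_inj: "embedding A arp arf h M N \<Longrightarrow> inj_on h (univ M)"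
  unfolding embedding_def by blast
lemma emb_img: "embedding A arp arf h M N \<Longrightarrow> h ` univ M \<subseteq> univ N"
  unfolding embedding_def by blast
lemma emb_funs: "embedding A arp arf h M N \<Longrightarrow> length xs = arf f \<Longrightarrow> set xs \<subseteq> univ M \<Longrightarrow> h (funs M f xs) = funs N f (map h xs)"
  unfolding embedding_def by blast
lemma emb_eval: "embedding A arp arf h M N \<Longrightarrow> wf_qf arp arf \<phi> \<Longrightarrow> range e \<subseteq> univ M \<Longrightarrow> eval_qf A N (h \<circ> e) \<phi> = eval_qf A M e \<phi>"
  unfolding embedding_def by blast

lemma subI:
  assumes "a_structure A arp arf M" "a_structure A arp arf N" "univ M \<subseteq> univ N"
    "\<And>f xs. length xs = arf f \<Longrightarrow> set xs \<subseteq> univ M \<Longrightarrow> funs M f xs = funs N f xs"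
    "\<And>\<phi> e. wf_qf arp arf \<phi> \<Longrightarrow> range e \<subseteq> univ M \<Longrightarrow> eval_qf A M e \<phi> = eval_qf A N e \<phi>"
  shows "substructure A arp arf M N"
  using assms unfolding substructure_def by blast

lemma sub_astr1: "substructure A arp arf M N \<Longrightarrow> a_structure A arp arf M"
  unfolding substructure_def by blast
lemma sub_astr2: "substructure A arp arf M N \<Longrightarrow> a_structure A arp arf N"
  unfolding substructure_def by blast
lemma sub_univ: "substructure A arp arf M N \<Longrightarrow> univ M \<subseteq> univ N"
  unfolding substructure_def by blast
lemma sub_funs: "substructure A arp arf M N \<Longrightarrow> length xs = arf f \<Longrightarrow> set xs \<subseteq> univ M \<Longrightarrow> funs M f xs = funs N f xs"
  unfolding substructure_def by blast
lemma sub_eval: "substructure A arp arf M N \<Longrightarrow> wf_qf arp arf \<phi> \<Longrightarrow> range e \<subseteq> univ M \<Longrightarrow> eval_qf A M e \<phi> = eval_qf A N e \<phi>"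
  unfolding substructure_def by blast

lemma isoI: "embedding A arp arf h M N \<Longrightarrow> h ` univ M = univ N \<Longrightarrow> isomorphic A arp arf M N"
  unfolding isomorphic_def by blast
lemma isoE: "isomorphic A arp arf M N \<Longrightarrow> (\<And>h. embedding A arp arf h M N \<Longrightarrow> h ` univ M = univ N \<Longrightarrow> P) \<Longrightarrow> P"
  unfolding isomorphic_def by blast

lemma eval_tm_univ_upd[simp]: "eval_tm (M\<lparr>univ := U\<rparr>) e t = eval_tm M e t"
proof (induction t)
  case (Var x)
  then show ?case by simp
next
  case (Fn f ts)
  have mapeq: "map (eval_tm (M\<lparr>univ := U\<rparr>) e) ts = map (eval_tm M e) ts"
    using Fn by (intro map_cong) auto
  show ?case by (simp only: eval_tm.simps mapeq) simp
qed

lemma eval_tm_univ_upd'[simp]: "eval_tm (M\<lparr>univ := U\<rparr>) = eval_tm M"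
  by (intro ext) simp

lemma eval_qf_univ_upd[simp]: "eval_qf A (M\<lparr>univ := U\<rparr>) e \<phi> = eval_qf A M e \<phi>"
  by (induction \<phi>) auto

lemma generated_univ_upd: "generated arf (M\<lparr>univ := U\<rparr>) X = generated arf M X"
proof
  show "generated arf (M\<lparr>univ := U\<rparr>) X \<subseteq> generated arf M X"
  proof
    fix x assume "x \<in> generated arf (M\<lparr>univ := U\<rparr>) X"
    then show "x \<in> generated arf M X"
      by induction (auto intro: generated.intros)
  qed
  show "generated arf M X \<subseteq> generated arf (M\<lparr>univ := U\<rparr>) X"
  proof
    fix x assume "x \<in> generated arf M X"
    then show "x \<in> generated arf (M\<lparr>univ := U\<rparr>) X"
      by induction (auto intro: generated.intros[where M="M\<lparr>univ := U\<rparr>", simplified])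
  qed
qed

lemma eval_tm_in:
  assumes "a_structure A arp arf M" "wf_tm arf t" "range e \<subseteq> univ M"
  shows "eval_tm M e t \<in> univ M"
  using assms(2)
proof (induction t)
  case (Var i) then show ?case using assms(3) by auto
next
  case (Fn f ts)
  then have "length (map (eval_tm M e) ts) = arf f" "set (map (eval_tm M e) ts) \<subseteq> univ M"
    by auto
  then show ?case using astr_funs[OF assms(1)] by simp
qed

lemma emb_comp:
  assumes h: "embedding A arp arf h M N" and k: "embedding A arp arf k N P"
  shows "embedding A arp arf (k \<circ> h) M P"
proof (rule embI)
  show "a_structure A arp arf M" using emb_astr1[OF h] .
  show "a_structure A arp arf P" using emb_astr2[OF k] .
  have hs: "h ` univ M \<subseteq> univ N" using emb_img[OF h] .
  show "inj_on (k \<circ> h) (univ M)"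
    using emb_inj[OF h] emb_inj[OF k] hs by (meson comp_inj_on inj_on_subset)
  show "(k \<circ> h) ` univ M \<subseteq> univ P"
    using hs emb_img[OF k] by (auto simp: image_subset_iff)
next
  fix f xs assume a: "length xs = arf f" "set xs \<subseteq> univ M"
  have 1: "h (funs M f xs) = funs N f (map h xs)" using emb_funs[OF h a] .
  have "length (map h xs) = arf f" "set (map h xs) \<subseteq> univ N"
    using a emb_img[OF h] by auto
  then have 2: "k (funs N f (map h xs)) = funs P f (map k (map h xs))" using emb_funs[OF k] by blast
  show "(k \<circ> h) (funs M f xs) = funs P f (map (k \<circ> h) xs)" using 1 2 by simp
next
  fix \<phi> and e :: "nat \<Rightarrow> _" assume a: "wf_qf arp arf \<phi>" "range e \<subseteq> univ M"
  have r: "range (h \<circ> e) \<subseteq> univ N" using a(2) emb_img[OF h] by (auto simp: image_subset_iff)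
  have "eval_qf A P ((k \<circ> h) \<circ> e) \<phi> = eval_qf A P (k \<circ> (h \<circ> e)) \<phi>"
    by (simp add: comp_assoc)
  also have "\<dots> = eval_qf A N (h \<circ> e) \<phi>" using emb_eval[OF k a(1) r] .
  also have "\<dots> = eval_qf A M e \<phi>" using emb_eval[OF h a] .
  finally show "eval_qf A P ((k \<circ> h) \<circ> e) \<phi> = eval_qf A M e \<phi>" .
qed

lemma emb_inv:
  assumes h: "embedding A arp arf h M N" and s: "h ` univ M = univ N"
  shows "embedding A arp arf (inv_into (univ M) h) N M"
    "inv_into (univ M) h ` univ N = univ M"
proof -
  let ?hi = "inv_into (univ M) h"
  have inj: "inj_on h (univ M)" using emb_inj[OF h] .
  show im: "?hi ` univ N = univ M"
    using inj s inv_into_image_cancel by fastforce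
  show "embedding A arp arf ?hi N M"
  proof (rule embI)
    show "a_structure A arp arf M" using emb_astr1[OF h] .
    show "a_structure A arp arf N" using emb_astr2[OF h] .
    show "inj_on ?hi (univ N)" using s by (simp add: inj_on_inv_into)
    show "?hi ` univ N \<subseteq> univ M" using im by simp
  next
    fix f ys assume a: "length ys = arf f" "set ys \<subseteq> univ N"
    define xs where "xs = map ?hi ys"
    have xs: "length xs = arf f" "set xs \<subseteq> univ M" using a im unfolding xs_def by auto
    have hx: "map h xs = ys" unfolding xs_def using a(2) s
      by (simp add: map_idI f_inv_into_f subset_iff)
    have he: "h (funs M f xs) = funs N f (map h xs)" using emb_funs[OF h xs] .
    have fm: "funs M f xs \<in> univ M" using astr_funs[OF emb_astr1[OF h] xs] .
    have eq: "funs N f ys = h (funs M f xs)" using he hx by simp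
    show "?hi (funs N f ys) = funs M f (map ?hi ys)"
      unfolding xs_def[symmetric] eq by (rule inv_into_f_f[OF inj fm])
  next
    fix \<phi> and e :: "nat \<Rightarrow> _" assume a: "wf_qf arp arf \<phi>" "range e \<subseteq> univ N"
    have r: "range (?hi \<circ> e) \<subseteq> univ M" using a im by auto
    have "eval_qf A M (?hi \<circ> e) \<phi> = eval_qf A N (h \<circ> (?hi \<circ> e)) \<phi>"
      using emb_eval[OF h a(1) r] by simp
    also have "h \<circ> (?hi \<circ> e) = e"
    proof (rule ext)
      fix x have "e x \<in> h ` univ M" using a(2) s by auto
      then show "(h \<circ> (?hi \<circ> e)) x = e x" by (simp add: f_inv_into_f)
    qed
    finally show "eval_qf A M (?hi \<circ> e) \<phi> = eval_qf A N e \<phi>" .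
  qed
qed

lemma iso_sym: assumes "isomorphic A arp arf M N" shows "isomorphic A arp arf N M"
proof -
  obtain h where h: "embedding A arp arf h M N" "h ` univ M = univ N" using assms by (rule isoE)
  show ?thesis using emb_inv[OF h] by (rule isoI)
qed

lemma iso_trans: assumes "isomorphic A arp arf M N" "isomorphic A arp arf N P" shows "isomorphic A arp arf M P"
proof -
  obtain h where h: "embedding A arp arf h M N" "h ` univ M = univ N" using assms(1) by (rule isoE)
  obtain k where k: "embedding A arp arf k N P" "k ` univ N = univ P" using assms(2) by (rule isoE)
  have "(k \<circ> h) ` univ M = univ P" using h(2) k(2) by (metis image_comp)
  then show ?thesis using emb_comp[OF h(1) k(1)] by (intro isoI)
qed

lemma sub_emb: "substructure A arp arf M N \<Longrightarrow> embedding A arp arf id M N"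
  by (rule embI) (auto simp: sub_astr1 sub_astr2 sub_univ sub_funs sub_eval)

lemma emb_id_refl: "a_structure A arp arf M \<Longrightarrow> embedding A arp arf id M M"
  by (rule embI) auto

lemma iso_refl: "a_structure A arp arf M \<Longrightarrow> isomorphic A arp arf M M"
  by (rule isoI[OF emb_id_refl]) auto

lemma sub_refl: "a_structure A arp arf M \<Longrightarrow> substructure A arp arf M M"
  by (rule subI) auto

lemma sub_trans:
  assumes "substructure A arp arf M N" "substructure A arp arf N P"
  shows "substructure A arp arf M P"
proof (rule subI)
  show "a_structure A arp arf M" using sub_astr1[OF assms(1)] .
  show "a_structure A arp arf P" using sub_astr2[OF assms(2)] .
  show "univ M \<subseteq> univ P" using sub_univ[OF assms(1)] sub_univ[OF assms(2)] by blast
next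
  fix f xs assume a: "length xs = arf f" "set xs \<subseteq> univ M"
  then have "set xs \<subseteq> univ N" using sub_univ[OF assms(1)] by blast
  then show "funs M f xs = funs P f xs" using sub_funs[OF assms(1) a] sub_funs[OF assms(2) a(1)] by simp
next
  fix \<phi> and e :: "nat \<Rightarrow> _" assume a: "wf_qf arp arf \<phi>" "range e \<subseteq> univ M"
  then have "range e \<subseteq> univ N" using sub_univ[OF assms(1)] by blast
  then show "eval_qf A M e \<phi> = eval_qf A P e \<phi>"
    using sub_eval[OF assms(1) a] sub_eval[OF assms(2) a(1)] by simp
qed

lemma image_astruct:
  assumes h: "embedding A arp arf h M N"
  shows "a_structure A arp arf (N\<lparr>univ := h ` univ M\<rparr>)"
proof (rule astrI)
  have N: "a_structure A arp arf N" using emb_astr2[OF h] .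
  have M: "a_structure A arp arf M" using emb_astr1[OF h] .
  have sub: "h ` univ M \<subseteq> univ N" using emb_img[OF h] .
  fix p xs assume a: "length xs = arp p" "set xs \<subseteq> univ (N\<lparr>univ := h ` univ M\<rparr>)"
  then have "set xs \<subseteq> univ N" using sub by simp
  then have "preds N p xs \<in> carrier A" using astr_preds[OF N a(1)] by blast
  then show "preds (N\<lparr>univ := h ` univ M\<rparr>) p xs \<in> carrier A" by simp
next
  have M: "a_structure A arp arf M" using emb_astr1[OF h] .
  fix f xs assume a: "length xs = arf f" "set xs \<subseteq> univ (N\<lparr>univ := h ` univ M\<rparr>)"
  define ys where "ys = map (inv_into (univ M) h) xs"
  have ys: "length ys = arf f" "set ys \<subseteq> univ M" using a by (auto simp: ys_def inv_into_into)
  have hy: "map h ys = xs" using a unfolding ys_def by (simp add: map_idI f_inv_into_f subset_iff)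
  have "h (funs M f ys) = funs N f (map h ys)" using emb_funs[OF h ys] .
  then have "funs N f xs = h (funs M f ys)" using hy by simp
  moreover have "funs M f ys \<in> univ M" using astr_funs[OF M ys] .
  ultimately show "funs (N\<lparr>univ := h ` univ M\<rparr>) f xs \<in> univ (N\<lparr>univ := h ` univ M\<rparr>)" by simp
qed

lemma image_sub:
  assumes h: "embedding A arp arf h M N"
  shows "substructure A arp arf (N\<lparr>univ := h ` univ M\<rparr>) N"
    "embedding A arp arf h M (N\<lparr>univ := h ` univ M\<rparr>)"
    "isomorphic A arp arf M (N\<lparr>univ := h ` univ M\<rparr>)"
proof -
  have S: "a_structure A arp arf (N\<lparr>univ := h ` univ M\<rparr>)" using image_astruct[OF h] .
  have N: "a_structure A arp arf N" using emb_astr2[OF h] .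
  have sub: "h ` univ M \<subseteq> univ N" using emb_img[OF h] .
  show "substructure A arp arf (N\<lparr>univ := h ` univ M\<rparr>) N"
    by (rule subI[OF S N]) (use sub in auto)
  show e: "embedding A arp arf h M (N\<lparr>univ := h ` univ M\<rparr>)"
  proof (rule embI[OF emb_astr1[OF h] S emb_inj[OF h]])
    show "h ` univ M \<subseteq> univ (N\<lparr>univ := h ` univ M\<rparr>)" by simp
  next
    fix f xs assume "length xs = arf f" "set xs \<subseteq> univ M"
    then show "h (funs M f xs) = funs (N\<lparr>univ := h ` univ M\<rparr>) f (map h xs)"
      using emb_funs[OF h] by simp
  next
    fix \<phi> and e :: "nat \<Rightarrow> _" assume "wf_qf arp arf \<phi>" "range e \<subseteq> univ M"
    then show "eval_qf A (N\<lparr>univ := h ` univ M\<rparr>) (h \<circ> e) \<phi> = eval_qf A M e \<phi>"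
      using emb_eval[OF h] by simp
  qed
  show "isomorphic A arp arf M (N\<lparr>univ := h ` univ M\<rparr>)"
    by (rule isoI[OF e]) simp
qed

lemma gen_sub:
  assumes M: "a_structure A arp arf M" and X: "X \<subseteq> univ M"
  shows "generated arf M X \<subseteq> univ M"
proof
  fix x assume "x \<in> generated arf M X"
  then show "x \<in> univ M"
  proof induction
    case (gen_base x) then show ?case using X by auto
  next
    case (gen_fun xs f)
    then have "set xs \<subseteq> univ M" by blast
    then show ?case using astr_funs[OF M gen_fun(1)] by blast
  qed
qed

lemma gen_image:
  assumes h: "embedding A arp arf h M N" and X: "X \<subseteq> univ M"
  shows "h ` generated arf M X = generated arf N (h ` X)"
proof
  have M: "a_structure A arp arf M" using emb_astr1[OF h] .
  have gs: "generated arf M X \<subseteq> univ M" using gen_sub[OF M X] .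
  show "h ` generated arf M X \<subseteq> generated arf N (h ` X)"
  proof (rule image_subsetI)
    fix x assume "x \<in> generated arf M X"
    then show "h x \<in> generated arf N (h ` X)"
    proof induction
      case (gen_base x) then show ?case by (auto intro: generated.gen_base)
    next
      case (gen_fun xs f)
      have "set xs \<subseteq> generated arf M X" using gen_fun by blast
      then have "set xs \<subseteq> univ M" using gs by blast
      then have "h (funs M f xs) = funs N f (map h xs)"
        using emb_funs[OF h gen_fun(1)] by blast
      moreover have "funs N f (map h xs) \<in> generated arf N (h ` X)"
        using gen_fun by (intro generated.gen_fun) auto
      ultimately show ?case by simp
    qed
  qed
next
  have M: "a_structure A arp arf M" using emb_astr1[OF h] .
  have gs: "generated arf M X \<subseteq> univ M" using gen_sub[OF M X] .
  show "generated arf N (h ` X) \<subseteq> h ` generated arf M X"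
  proof
    fix y assume "y \<in> generated arf N (h ` X)"
    then show "y \<in> h ` generated arf M X"
    proof induction
      case (gen_base y) then show ?case by (auto intro: generated.gen_base)
    next
      case (gen_fun ys f)
      define xs where "xs = map (inv_into (generated arf M X) h) ys"
      have xs: "length xs = arf f" "set xs \<subseteq> generated arf M X"
        using gen_fun by (auto simp: xs_def inv_into_into)
      have hx: "map h xs = ys" using gen_fun unfolding xs_def
        by (simp add: map_idI f_inv_into_f)
      have "set xs \<subseteq> univ M" using xs gs by blast
      then have "h (funs M f xs) = funs N f (map h xs)"
        using emb_funs[OF h xs(1)] by blast
      then have "h (funs M f xs) = funs N f ys" using hx by simp
      moreover have "funs M f xs \<in> generated arf M X"
        using xs by (intro generated.gen_fun) auto
      ultimately show ?case by (metis rev_image_eqI)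
    qed
  qed
qed

lemma fin_gen_emb:
  assumes h: "embedding A arp arf h M N" "h ` univ M = univ N" and fg: "fin_gen arf M"
  shows "fin_gen arf N"
proof -
  obtain X where X: "finite X" "X \<subseteq> univ M" "univ M = generated arf M X"
    using fg unfolding fin_gen_def by blast
  have "univ N = h ` generated arf M X" using X(3) h(2) by simp
  also have "\<dots> = generated arf N (h ` X)" using gen_image[OF h(1) X(2)] .
  finally have "univ N = generated arf N (h ` X)" .
  moreover have "finite (h ` X)" "h ` X \<subseteq> univ N" using X h(2) by auto
  ultimately show ?thesis unfolding fin_gen_def by blast
qed

lemma fin_gen_iso: assumes "isomorphic A arp arf M N" "fin_gen arf M" shows "fin_gen arf N"
proof -
  obtain h where h: "embedding A arp arf h M N" "h ` univ M = univ N" using assms(1) by (rule isoE)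
  show ?thesis using fin_gen_emb[OF h assms(2)] .
qed

lemma iso_astr1: "isomorphic A arp arf M N \<Longrightarrow> a_structure A arp arf M"
  unfolding isomorphic_def embedding_def by blast
lemma iso_astr2: "isomorphic A arp arf M N \<Longrightarrow> a_structure A arp arf N"
  unfolding isomorphic_def embedding_def by blast

lemma iso_emb: "isomorphic A arp arf M N \<Longrightarrow> \<exists>h. embedding A arp arf h M N"
  unfolding isomorphic_def by blast

lemma HP_emb:
  assumes hp: "HP A arp arf K" and B: "B \<in> K" and h: "embedding A arp arf h C B" and fg: "fin_gen arf C"
  shows "\<exists>B'\<in>K. isomorphic A arp arf C B'"
proof -
  let ?S = "B\<lparr>univ := h ` univ C\<rparr>"
  have s: "substructure A arp arf ?S B" and i: "isomorphic A arp arf C ?S" using image_sub[OF h] by auto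
  have f: "fin_gen arf ?S" using fin_gen_iso[OF i fg] .
  have "\<forall>C. fin_gen arf C \<and> substructure A arp arf C B \<longrightarrow> (\<exists>B'\<in>K. isomorphic A arp arf C B')"
    using hp B unfolding HP_def by blast
  then obtain B' where "B' \<in> K" "isomorphic A arp arf ?S B'" using s f by blast
  then show ?thesis using iso_trans[OF i] by blast
qed

lemma age_lemma:
  assumes N: "a_structure A arp arf N"
    and K1: "\<forall>B\<in>K. fin_gen arf B \<and> (\<exists>h. embedding A arp arf h B N)"
    and K2: "\<forall>C. fin_gen arf C \<and> substructure A arp arf C N \<longrightarrow> (\<exists>B'\<in>K. isomorphic A arp arf C B')"
  shows "eq_upto_iso A arp arf K (age A arp arf N)"
  unfolding eq_upto_iso_def
proof (intro conjI ballI)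
  fix B assume B: "B \<in> K"
  then obtain h where h: "embedding A arp arf h B N" using K1 by blast
  let ?S = "N\<lparr>univ := h ` univ B\<rparr>"
  have s: "substructure A arp arf ?S N" and i: "isomorphic A arp arf B ?S" using image_sub[OF h] by auto
  have "fin_gen arf B" using K1 B by blast
  then have "fin_gen arf ?S" using fin_gen_iso[OF i] by blast
  then have "?S \<in> age A arp arf N" unfolding age_def using s by blast
  then show "\<exists>C\<in>age A arp arf N. isomorphic A arp arf B C" using i by blast
next
  fix C assume "C \<in> age A arp arf N"
  then have "fin_gen arf C \<and> substructure A arp arf C N" unfolding age_def by blast
  then show "\<exists>B\<in>K. isomorphic A arp arf C B" using K2 by blast
qed

definition transp :: "('b, 'p, 'f, 'a) struct \<Rightarrow> ('b \<Rightarrow> 'c) \<Rightarrow> ('c \<Rightarrow> 'b) \<Rightarrow> ('c, 'p, 'f, 'a) struct" where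
  "transp E g gi = \<lparr>univ = g ` univ E, preds = (\<lambda>p xs. preds E p (map gi xs)),
      funs = (\<lambda>f xs. g (funs E f (map gi xs)))\<rparr>"

lemma transp_simps[simp]:
  "univ (transp E g gi) = g ` univ E"
  "preds (transp E g gi) p xs = preds E p (map gi xs)"
  "funs (transp E g gi) f xs = g (funs E f (map gi xs))"
  unfolding transp_def by auto

lemma transp:
  assumes E: "a_structure A arp arf E" and gi: "\<And>y. y \<in> univ E \<Longrightarrow> gi (g y) = y"
  shows "a_structure A arp arf (transp E g gi)" "embedding A arp arf gi (transp E g gi) E"
    "gi ` univ (transp E g gi) = univ E" "isomorphic A arp arf (transp E g gi) E"
proof -
  let ?T = "transp E g gi"
  have im: "gi ` univ ?T = univ E"
  proof -
    have "gi ` g ` univ E = univ E"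
    proof
      show "gi ` g ` univ E \<subseteq> univ E" using gi by auto
      show "univ E \<subseteq> gi ` g ` univ E"
      proof
        fix y assume "y \<in> univ E"
        then have "gi (g y) = y" "g y \<in> g ` univ E" using gi by auto
        then show "y \<in> gi ` g ` univ E" by (metis rev_image_eqI)
      qed
    qed
    then show ?thesis by simp
  qed
  show T: "a_structure A arp arf ?T"
  proof (rule astrI)
    fix p xs assume a: "length xs = arp p" "set xs \<subseteq> univ ?T"
    then have "set (map gi xs) \<subseteq> univ E" "length (map gi xs) = arp p" using im by auto
    then show "preds ?T p xs \<in> carrier A" using astr_preds[OF E] by simp
  next
    fix f xs assume a: "length xs = arf f" "set xs \<subseteq> univ ?T"
    then have "set (map gi xs) \<subseteq> univ E" "length (map gi xs) = arf f" using im by auto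
    then have "funs E f (map gi xs) \<in> univ E" using astr_funs[OF E] by blast
    then show "funs ?T f xs \<in> univ ?T" by simp
  qed
  show "gi ` univ ?T = univ E" using im .
  have tm: "gi (eval_tm ?T e t) = eval_tm E (gi \<circ> e) t"
    if "wf_tm arf t" "range e \<subseteq> univ ?T" for t e
    using that(1)
  proof (induction t)
    case (Var x) then show ?case by simp
  next
    case (Fn f ts)
    have r: "range (gi \<circ> e) \<subseteq> univ E" using that(2) im by (auto simp: image_subset_iff)
    have mm: "map gi (map (eval_tm ?T e) ts) = map (eval_tm E (gi \<circ> e)) ts"
      using Fn by (auto simp: comp_def)
    have "set (map (eval_tm E (gi \<circ> e)) ts) \<subseteq> univ E" "length (map (eval_tm E (gi \<circ> e)) ts) = arf f"
      using Fn eval_tm_in[OF E _ r] by auto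
    then have fin: "funs E f (map (eval_tm E (gi \<circ> e)) ts) \<in> univ E"
      using astr_funs[OF E] by blast
    have 1: "eval_tm ?T e (Fn f ts) = g (funs E f (map (eval_tm E (gi \<circ> e)) ts))"
      by (simp only: eval_tm.simps transp_simps mm)
    have "gi (eval_tm ?T e (Fn f ts)) = gi (g (funs E f (map (eval_tm E (gi \<circ> e)) ts)))"
      by (simp only: 1)
    also have "\<dots> = funs E f (map (eval_tm E (gi \<circ> e)) ts)" by (rule gi[OF fin])
    also have "\<dots> = eval_tm E (gi \<circ> e) (Fn f ts)" by (simp only: eval_tm.simps)
    finally show ?case .
  qed
  have qf: "eval_qf A E (gi \<circ> e) \<phi> = eval_qf A ?T e \<phi>"
    if "wf_qf arp arf \<phi>" "range e \<subseteq> univ ?T" for \<phi> e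
    using that(1)
  proof (induction \<phi>)
    case (Atom p ts)
    have "map gi (map (eval_tm ?T e) ts) = map (eval_tm E (gi \<circ> e)) ts"
      using Atom tm[OF _ that(2)] by auto
    then have mm: "map gi (map (eval_tm ?T e) ts) = map (eval_tm E (gi \<circ> e)) ts" .
    have "eval_qf A ?T e (Atom p ts) = preds E p (map gi (map (eval_tm ?T e) ts))"
      by (simp only: eval_qf.simps transp_simps)
    also have "\<dots> = preds E p (map (eval_tm E (gi \<circ> e)) ts)" by (simp only: mm)
    also have "\<dots> = eval_qf A E (gi \<circ> e) (Atom p ts)" by (simp only: eval_qf.simps)
    finally show ?case by (rule sym)
  qed auto
  show e: "embedding A arp arf gi ?T E"
  proof (rule embI[OF T E])
    show "inj_on gi (univ ?T)" using gi by (auto simp: inj_on_def)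
    show "gi ` univ ?T \<subseteq> univ E" using im by simp
  next
    fix f xs assume a: "length xs = arf f" "set xs \<subseteq> univ ?T"
    then have "set (map gi xs) \<subseteq> univ E" "length (map gi xs) = arf f" using im by auto
    then have "funs E f (map gi xs) \<in> univ E" using astr_funs[OF E] by blast
    then show "gi (funs ?T f xs) = funs E f (map gi xs)" using gi by simp
  next
    fix \<phi> and e :: "nat \<Rightarrow> _" assume "wf_qf arp arf \<phi>" "range e \<subseteq> univ ?T"
    then show "eval_qf A E (gi \<circ> e) \<phi> = eval_qf A ?T e \<phi>" using qf by blast
  qed
  show "isomorphic A arp arf ?T E" using isoI[OF e im] .
qed

lemma start:
  fixes D :: "('m, 'p, 'f, 'a) struct"
  assumes D: "a_structure A arp arf D"
  shows "\<exists>M :: ('m \<times> nat, 'p, 'f, 'a) struct. (\<forall>z\<in>univ M. snd z \<le> 0) \<and> isomorphic A arp arf M D"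
proof -
  let ?M = "transp D (\<lambda>x. (x, 0::nat)) fst"
  have "isomorphic A arp arf ?M D" using transp(4)[OF D, of fst "\<lambda>x. (x, 0::nat)"] by simp
  moreover have "\<forall>z\<in>univ ?M. snd z \<le> 0" by auto
  ultimately show ?thesis by blast
qed

lemma extend:
  fixes M :: "('m \<times> nat, 'p, 'f, 'a) struct" and D :: "('m, 'p, 'f, 'a) struct"
  assumes tags: "\<forall>z\<in>univ M. snd z \<le> n" and h: "embedding A arp arf h M D"
  shows "\<exists>M'. substructure A arp arf M M' \<and> (\<forall>z\<in>univ M'. snd z \<le> Suc n) \<and> isomorphic A arp arf M' D"
proof -
  have M: "a_structure A arp arf M" using emb_astr1[OF h] .
  have D: "a_structure A arp arf D" using emb_astr2[OF h] .
  have inj: "inj_on h (univ M)" using emb_inj[OF h] .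
  have hs: "h ` univ M \<subseteq> univ D" using emb_img[OF h] .
  define g where "g y = (if y \<in> h ` univ M then inv_into (univ M) h y else (y, Suc n))" for y
  define gi where "gi z = (if z \<in> univ M then h z else fst z)" for z
  have gig: "gi (g y) = y" if "y \<in> univ D" for y
  proof (cases "y \<in> h ` univ M")
    case True
    then have "inv_into (univ M) h y \<in> univ M" by (rule inv_into_into)
    then show ?thesis using True unfolding g_def gi_def by (simp add: f_inv_into_f)
  next
    case False
    have "(y, Suc n) \<notin> univ M" using tags by fastforce
    then show ?thesis using False unfolding g_def gi_def by simp
  qed
  let ?T = "transp D g gi"
  have T: "a_structure A arp arf ?T" and eT: "embedding A arp arf gi ?T D"
    and iT: "isomorphic A arp arf ?T D" using transp[where g=g and gi=gi, OF D gig] by auto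
  have gh: "g (h z) = z" if "z \<in> univ M" for z
    using that inj unfolding g_def by (simp add: inv_into_f_f)
  have giM: "gi z = h z" if "z \<in> univ M" for z using that unfolding gi_def by simp
  have sub: "univ M \<subseteq> univ ?T"
  proof
    fix z assume z: "z \<in> univ M"
    then have "h z \<in> univ D" using hs by blast
    then have "g (h z) \<in> univ ?T" by simp
    then show "z \<in> univ ?T" using gh[OF z] by simp
  qed
  have "substructure A arp arf M ?T"
  proof (rule subI[OF M T sub])
    fix f xs assume a: "length xs = arf f" "set xs \<subseteq> univ M"
    have mg: "map gi xs = map h xs" using a(2) giM by (auto intro: map_cong)
    have hf: "h (funs M f xs) = funs D f (map h xs)" using emb_funs[OF h a] .
    have fm: "funs M f xs \<in> univ M" using astr_funs[OF M a] .
    have "funs ?T f xs = g (funs D f (map gi xs))" by (simp only: transp_simps)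
    also have "\<dots> = g (funs D f (map h xs))" by (simp only: mg)
    also have "\<dots> = g (h (funs M f xs))" by (simp only: hf)
    also have "\<dots> = funs M f xs" by (rule gh[OF fm])
    finally show "funs M f xs = funs ?T f xs" by simp
  next
    fix \<phi> and e :: "nat \<Rightarrow> _" assume a: "wf_qf arp arf \<phi>" "range e \<subseteq> univ M"
    have r: "range e \<subseteq> univ ?T" using a(2) sub by blast
    have "gi \<circ> e = h \<circ> e"
    proof (rule ext)
      fix x have "e x \<in> univ M" using a(2) by auto
      then show "(gi \<circ> e) x = (h \<circ> e) x" using giM by simp
    qed
    then have "eval_qf A ?T e \<phi> = eval_qf A D (h \<circ> e) \<phi>" using emb_eval[OF eT a(1) r] by simp
    also have "\<dots> = eval_qf A M e \<phi>" using emb_eval[OF h a] .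
    finally show "eval_qf A M e \<phi> = eval_qf A ?T e \<phi>" by simp
  qed
  moreover have "\<forall>z\<in>univ ?T. snd z \<le> Suc n"
  proof
    fix z assume "z \<in> univ ?T"
    then obtain y where y: "y \<in> univ D" "z = g y" by auto
    show "snd z \<le> Suc n"
    proof (cases "y \<in> h ` univ M")
      case True
      then have "inv_into (univ M) h y \<in> univ M" by (rule inv_into_into)
      then have "snd (inv_into (univ M) h y) \<le> n" using tags by blast
      then show ?thesis using True y unfolding g_def by simp
    next
      case False then show ?thesis using y unfolding g_def by simp
    qed
  qed
  ultimately show ?thesis using iT by blast
qed

lemma dep_chain:
  assumes "\<exists>x. P 0 x" "\<And>n x. P n x \<Longrightarrow> \<exists>y. P (Suc n) y \<and> R x y"
  shows "\<exists>f. \<forall>n. P n (f n) \<and> R (f n) (f (Suc n))"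
proof -
  define f where "f = rec_nat (SOME x. P 0 x) (\<lambda>n x. SOME y. P (Suc n) y \<and> R x y)"
  have f0: "f 0 = (SOME x. P 0 x)" unfolding f_def by simp
  have fS: "f (Suc n) = (SOME y. P (Suc n) y \<and> R (f n) y)" for n unfolding f_def by simp
  have P: "P n (f n)" for n
  proof (induction n)
    case 0 then show ?case using assms(1) f0 by (metis someI_ex)
  next
    case (Suc n)
    then have "\<exists>y. P (Suc n) y \<and> R (f n) y" using assms(2) by blast
    then have "P (Suc n) (f (Suc n)) \<and> R (f n) (f (Suc n))" unfolding fS by (rule someI_ex)
    then show ?case by blast
  qed
  have "R (f n) (f (Suc n))" for n
  proof -
    have "\<exists>y. P (Suc n) y \<and> R (f n) y" using assms(2) P by blast
    then have "P (Suc n) (f (Suc n)) \<and> R (f n) (f (Suc n))" unfolding fS by (rule someI_ex)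
    then show ?thesis by blast
  qed
  then show ?thesis using P by blast
qed

lemma inj_prod_nat:
  assumes "infinite (UNIV :: 'm set)"
  shows "\<exists>j :: 'm \<times> nat \<Rightarrow> 'm. inj j"
proof -
  obtain f :: "nat \<Rightarrow> 'm" where f: "inj f" using infinite_countable_subset[OF assms] by blast
  have "(card_of ((UNIV :: 'm set) \<times> (UNIV :: 'm set)), card_of (UNIV :: 'm set)) \<in> ordIso"
    using card_of_Times_same_infinite[OF assms] .
  then have "(card_of ((UNIV :: 'm set) \<times> (UNIV :: 'm set)), card_of (UNIV :: 'm set)) \<in> ordLeq"
    by (rule ordIso_iff_ordLeq[THEN iffD1, THEN conjunct1])
  then have "\<exists>g. inj_on g ((UNIV :: 'm set) \<times> (UNIV :: 'm set)) \<and> g ` ((UNIV :: 'm set) \<times> (UNIV :: 'm set)) \<subseteq> (UNIV :: 'm set)"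
    by (rule card_of_ordLeq[THEN iffD2])
  then obtain g :: "'m \<times> 'm \<Rightarrow> 'm" where g: "inj_on g ((UNIV :: 'm set) \<times> (UNIV :: 'm set))"
    by blast
  have "inj (\<lambda>p. g (fst p, f (snd p)))"
  proof (rule injI)
    fix a b :: "'m \<times> nat"
    assume eq: "g (fst a, f (snd a)) = g (fst b, f (snd b))"
    have "(fst a, f (snd a)) = (fst b, f (snd b))"
      using inj_onD[OF g eq] by simp
    then have "fst a = fst b" "f (snd a) = f (snd b)" by simp_all
    then have "fst a = fst b" "snd a = snd b" using injD[OF f] by simp_all
    then show "a = b" by (simp add: prod_eq_iff)
  qed
  then show ?thesis by blast
qed

lemma preds_agree:
  assumes S: "substructure A arp arf S T" and xs: "set xs \<subseteq> univ S" "univ S \<noteq> {}" "length xs = arp p"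
  shows "preds S p xs = preds T p xs"
proof -
  obtain s0 where s0: "s0 \<in> univ S" using xs(2) by blast
  define e where "e i = (if i < length xs then xs ! i else s0)" for i
  have r: "range e \<subseteq> univ S"
  proof
    fix y assume "y \<in> range e"
    then obtain i where "y = e i" by blast
    then show "y \<in> univ S" using xs(1) s0 unfolding e_def by (auto simp: subset_iff)
  qed
  have me: "map e [0..<length xs] = xs" unfolding e_def by (rule nth_equalityI) auto
  let ?\<phi> = "Atom p (map Var [0..<length xs])"
  have wf: "wf_qf arp arf ?\<phi>" using xs(3) by simp
  have "eval_qf A S e ?\<phi> = eval_qf A T e ?\<phi>" using sub_eval[OF S wf r] .
  moreover have "eval_qf A S e ?\<phi> = preds S p xs"
  proof -
    have "map (eval_tm S e) (map Var [0..<length xs]) = map e [0..<length xs]" by simp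
    then show ?thesis using me by simp
  qed
  moreover have "eval_qf A T e ?\<phi> = preds T p xs"
  proof -
    have "map (eval_tm T e) (map Var [0..<length xs]) = map e [0..<length xs]" by simp
    then show ?thesis using me by simp
  qed
  ultimately show ?thesis by simp
qed

lemma chain_le:
  assumes ch: "\<And>n. substructure A arp arf (Ms n) (Ms (Suc n))" and ij: "i \<le> j"
  shows "substructure A arp arf (Ms i) (Ms j)"
  using ij
proof (induction rule: dec_induct)
  case base then show ?case using sub_refl[OF sub_astr1[OF ch[of i]]] .
next
  case (step m) then show ?case using sub_trans ch by blast
qed

lemma chain_mono:
  assumes ch: "\<And>n. substructure A arp arf (Ms n) (Ms (Suc n))" and ij: "i \<le> j"
  shows "univ (Ms i) \<subseteq> univ (Ms j)"
  using sub_univ[OF chain_le[where Ms=Ms, OF ch ij]] .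

lemma chain_finite:
  assumes ch: "\<And>n. substructure A arp arf (Ms n) (Ms (Suc n))"
  shows "finite X \<Longrightarrow> X \<subseteq> (\<Union>n. univ (Ms n)) \<Longrightarrow> \<exists>n. X \<subseteq> univ (Ms n)"
proof (induction X rule: finite_induct)
  case empty then show ?case by blast
next
  case (insert x F)
  then obtain n where n: "F \<subseteq> univ (Ms n)" by blast
  obtain k where k: "x \<in> univ (Ms k)" using insert by blast
  have "univ (Ms n) \<subseteq> univ (Ms (max n k))" "univ (Ms k) \<subseteq> univ (Ms (max n k))"
    using chain_mono[where Ms=Ms, OF ch] by auto
  then show ?case using n k by blast
qed

lemma funs_agree_chain:
  assumes ch: "\<And>n. substructure A arp arf (Ms n) (Ms (Suc n))"
    and a: "length xs = arf f" "set xs \<subseteq> univ (Ms i)" "set xs \<subseteq> univ (Ms j)"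
  shows "funs (Ms i) f xs = funs (Ms j) f xs"
proof (cases "i \<le> j")
  case True then show ?thesis using sub_funs[OF chain_le[where Ms=Ms, OF ch True] a(1,2)] by simp
next
  case False then have "j \<le> i" by simp
  then show ?thesis using sub_funs[OF chain_le[where Ms=Ms, OF ch] a(1,3)] by simp
qed

lemma preds_agree_chain:
  assumes ch: "\<And>n. substructure A arp arf (Ms n) (Ms (Suc n))"
    and a: "length xs = arp p" "set xs \<subseteq> univ (Ms i)" "set xs \<subseteq> univ (Ms j)"
      "univ (Ms i) \<noteq> {}" "univ (Ms j) \<noteq> {}"
  shows "preds (Ms i) p xs = preds (Ms j) p xs"
proof (cases "i \<le> j")
  case True then show ?thesis using preds_agree[OF chain_le[where Ms=Ms, OF ch True] a(2,4,1)] by simp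
next
  case False then have "j \<le> i" by simp
  then show ?thesis using preds_agree[OF chain_le[where Ms=Ms, OF ch] a(3,5,1)] by simp
qed

definition unionc :: "(nat \<Rightarrow> ('n, 'p, 'f, 'a) struct) \<Rightarrow> ('n, 'p, 'f, 'a) struct" where
  "unionc Ms = \<lparr>univ = (\<Union>n. univ (Ms n)),
     preds = (\<lambda>p xs. preds (Ms (LEAST k. set xs \<subseteq> univ (Ms k) \<and> univ (Ms k) \<noteq> {})) p xs),
     funs = (\<lambda>f xs. funs (Ms (LEAST k. set xs \<subseteq> univ (Ms k))) f xs)\<rparr>"

lemma unionc_simps:
  "univ (unionc Ms) = (\<Union>n. univ (Ms n))"
  "preds (unionc Ms) p xs = preds (Ms (LEAST k. set xs \<subseteq> univ (Ms k) \<and> univ (Ms k) \<noteq> {})) p xs"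
  "funs (unionc Ms) f xs = funs (Ms (LEAST k. set xs \<subseteq> univ (Ms k))) f xs"
  unfolding unionc_def by simp_all

lemma unionc_sub:
  assumes ch: "\<And>n. substructure A arp arf (Ms n) (Ms (Suc n))"
  shows "substructure A arp arf (Ms n) (unionc Ms)"
proof -
  let ?U = "unionc Ms"
  have astr: "a_structure A arp arf (Ms k)" for k using sub_astr1[OF ch[of k]] .
  have fin: "\<exists>k. set xs \<subseteq> univ (Ms k)" if "set xs \<subseteq> univ ?U" for xs
    using chain_finite[where Ms=Ms, OF ch, of "set xs"] that by (simp add: unionc_simps)
  have idxf: "set xs \<subseteq> univ (Ms (LEAST k. set xs \<subseteq> univ (Ms k)))" if "set xs \<subseteq> univ ?U" for xs
    using fin[OF that] by (rule LeastI_ex)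
  have idxp: "set xs \<subseteq> univ (Ms (LEAST k. set xs \<subseteq> univ (Ms k) \<and> univ (Ms k) \<noteq> {}))"
    if a0: "set xs \<subseteq> univ ?U" for xs
  proof (cases "\<exists>k. set xs \<subseteq> univ (Ms k) \<and> univ (Ms k) \<noteq> {}")
    case True then show ?thesis using LeastI_ex[OF True] by blast
  next
    case False
    have "xs = []"
    proof (rule ccontr)
      assume "xs \<noteq> []"
      then obtain x where x: "x \<in> set xs" by (cases xs) auto
      obtain k where k: "set xs \<subseteq> univ (Ms k)" using fin[OF a0] by blast
      have "x \<in> univ (Ms k)" using k x by (rule subsetD)
      then have "univ (Ms k) \<noteq> {}" by blast
      then have "\<exists>k. set xs \<subseteq> univ (Ms k) \<and> univ (Ms k) \<noteq> {}" using k by (intro exI conjI)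
      then show False by (rule notE[OF False])
    qed
    then have "set xs = {}" by simp
    then show ?thesis by (simp only: empty_subsetI)
  qed
  have idxp2: "set xs \<subseteq> univ (Ms (LEAST k. set xs \<subseteq> univ (Ms k) \<and> univ (Ms k) \<noteq> {})) \<and>
      univ (Ms (LEAST k. set xs \<subseteq> univ (Ms k) \<and> univ (Ms k) \<noteq> {})) \<noteq> {}"
    if "set xs \<subseteq> univ (Ms m)" "univ (Ms m) \<noteq> {}" for xs m
  proof -
    have ex: "\<exists>k. set xs \<subseteq> univ (Ms k) \<and> univ (Ms k) \<noteq> {}" using that by blast
    show ?thesis by (rule LeastI_ex[OF ex])
  qed
  have U: "a_structure A arp arf ?U"
  proof (rule astrI)
    fix p xs assume a: "length xs = arp p" "set xs \<subseteq> univ ?U"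
    then show "preds ?U p xs \<in> carrier A"
      using astr_preds[OF astr a(1) idxp[OF a(2)]] by (simp add: unionc_simps)
  next
    fix f xs assume a: "length xs = arf f" "set xs \<subseteq> univ ?U"
    then have "funs (Ms (LEAST k. set xs \<subseteq> univ (Ms k))) f xs \<in> univ (Ms (LEAST k. set xs \<subseteq> univ (Ms k)))"
      using astr_funs[OF astr a(1) idxf[OF a(2)]] by simp
    then show "funs ?U f xs \<in> univ ?U" by (auto simp: unionc_simps)
  qed
  have su: "univ (Ms m) \<subseteq> univ ?U" for m by (auto simp: unionc_simps)
  have fa: "funs (Ms m) f xs = funs ?U f xs" if "length xs = arf f" "set xs \<subseteq> univ (Ms m)" for m f xs
  proof -
    have "set xs \<subseteq> univ ?U" using that(2) su by blast
    then have "set xs \<subseteq> univ (Ms (LEAST k. set xs \<subseteq> univ (Ms k)))" by (rule idxf)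
    then show ?thesis using funs_agree_chain[where Ms=Ms, OF ch that(1) that(2)] by (simp add: unionc_simps)
  qed
  have pa: "preds (Ms m) p xs = preds ?U p xs"
    if "length xs = arp p" "set xs \<subseteq> univ (Ms m)" "univ (Ms m) \<noteq> {}" for m p xs
  proof -
    note l = idxp2[OF that(2,3)]
    show ?thesis using preds_agree_chain[where Ms=Ms, OF ch that(1) that(2) conjunct1[OF l] that(3) conjunct2[OF l]]
      by (simp add: unionc_simps)
  qed
  have tm: "eval_tm ?U e t = eval_tm (Ms n) e t" if "wf_tm arf t" "range e \<subseteq> univ (Ms n)" for t e
    using that(1)
  proof (induction t)
    case (Var x) then show ?case by simp
  next
    case (Fn f ts)
    have mm: "map (eval_tm ?U e) ts = map (eval_tm (Ms n) e) ts" using Fn by auto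
    have l: "length (map (eval_tm (Ms n) e) ts) = arf f" using Fn by simp
    have s: "set (map (eval_tm (Ms n) e) ts) \<subseteq> univ (Ms n)"
      using Fn eval_tm_in[OF astr _ that(2)] by auto
    have "eval_tm ?U e (Fn f ts) = funs ?U f (map (eval_tm (Ms n) e) ts)"
      by (simp only: eval_tm.simps mm)
    also have "\<dots> = funs (Ms n) f (map (eval_tm (Ms n) e) ts)" using fa[OF l s] by simp
    also have "\<dots> = eval_tm (Ms n) e (Fn f ts)" by simp
    finally show ?case .
  qed
  show ?thesis
  proof (rule subI[OF astr U su])
    fix f xs assume "length xs = arf f" "set xs \<subseteq> univ (Ms n)"
    then show "funs (Ms n) f xs = funs ?U f xs" by (rule fa)
  next
    fix \<phi> and e :: "nat \<Rightarrow> _" assume a: "wf_qf arp arf \<phi>" "range e \<subseteq> univ (Ms n)"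
    have ne: "univ (Ms n) \<noteq> {}" using a(2) by blast
    show "eval_qf A (Ms n) e \<phi> = eval_qf A ?U e \<phi>"
      using a(1)
    proof (induction \<phi>)
      case (Atom p ts)
      have mm: "map (eval_tm ?U e) ts = map (eval_tm (Ms n) e) ts" using Atom tm[OF _ a(2)] by auto
      have l: "length (map (eval_tm (Ms n) e) ts) = arp p" using Atom by simp
      have s: "set (map (eval_tm (Ms n) e) ts) \<subseteq> univ (Ms n)"
        using Atom eval_tm_in[OF astr _ a(2)] by auto
      have "eval_qf A ?U e (Atom p ts) = preds ?U p (map (eval_tm (Ms n) e) ts)"
        by (simp only: eval_qf.simps mm)
      also have "\<dots> = preds (Ms n) p (map (eval_tm (Ms n) e) ts)" using pa[OF l s ne] by simp
      also have "\<dots> = eval_qf A (Ms n) e (Atom p ts)" by simp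
      finally show ?case by simp
    qed auto
  qed
qed

lemma gen_into:
  assumes C: "substructure A arp arf C N" and X: "univ C = generated arf C X"
    and cl: "\<And>f xs. length xs = arf f \<Longrightarrow> set xs \<subseteq> U \<Longrightarrow> funs N f xs \<in> U"
    and XU: "X \<subseteq> U"
  shows "univ C \<subseteq> U"
proof
  fix x assume "x \<in> univ C"
  then have "x \<in> generated arf C X" using X by simp
  then show "x \<in> U"
  proof induction
    case (gen_base x) then show ?case using XU by blast
  next
    case (gen_fun xs f)
    then have s1: "set xs \<subseteq> univ C" and s2: "set xs \<subseteq> U" using X by blast+
    have "funs C f xs = funs N f xs" using sub_funs[OF C gen_fun(1) s1] .
    then show ?case using cl[OF gen_fun(1) s2] by simp
  qed
qed

lemma unionc_fg:
  assumes ch: "\<And>n. substructure A arp arf (Ms n) (Ms (Suc n))"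
    and fg: "fin_gen arf C" and C: "substructure A arp arf C (unionc Ms)"
  shows "\<exists>n. substructure A arp arf C (Ms n)"
proof -
  let ?U = "unionc Ms"
  obtain X where X: "finite X" "X \<subseteq> univ C" "univ C = generated arf C X"
    using fg unfolding fin_gen_def by blast
  have "X \<subseteq> (\<Union>n. univ (Ms n))" using X(2) sub_univ[OF C] by (auto simp: unionc_simps)
  then obtain n where n: "X \<subseteq> univ (Ms n)" using chain_finite[where Ms=Ms, OF ch X(1)] by blast
  have sn: "substructure A arp arf (Ms n) ?U" using unionc_sub[where Ms=Ms, OF ch] .
  have astr: "a_structure A arp arf (Ms n)" using sub_astr1[OF sn] .
  have cl: "funs ?U f xs \<in> univ (Ms n)" if "length xs = arf f" "set xs \<subseteq> univ (Ms n)" for f xs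
    using sub_funs[OF sn that] astr_funs[OF astr that] by simp
  have cu: "univ C \<subseteq> univ (Ms n)" using gen_into[OF C X(3) cl n] by blast
  have "substructure A arp arf C (Ms n)"
  proof (rule subI[OF sub_astr1[OF C] astr cu])
    fix f xs assume a: "length xs = arf f" "set xs \<subseteq> univ C"
    then have "set xs \<subseteq> univ (Ms n)" using cu by blast
    then show "funs C f xs = funs (Ms n) f xs"
      using sub_funs[OF C a] sub_funs[OF sn a(1)] by simp
  next
    fix \<phi> and e :: "nat \<Rightarrow> _" assume a: "wf_qf arp arf \<phi>" "range e \<subseteq> univ C"
    then have "range e \<subseteq> univ (Ms n)" using cu by blast
    then show "eval_qf A C e \<phi> = eval_qf A (Ms n) e \<phi>"
      using sub_eval[OF C a] sub_eval[OF sn a(1)] by simp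
  qed
  then show ?thesis by blast
qed

lemma union_chain_funs:
  assumes ch: "\<And>n. substructure A arp arf (Ms n) (Ms (Suc n))"
    and a: "length xs = arf f" "set xs \<subseteq> univ (Ms n)"
  shows "funs (union_chain (range Ms)) f xs = funs (Ms n) f xs"
proof -
  let ?Q = "\<lambda>y. \<exists>B\<in>range Ms. set xs \<subseteq> univ B \<and> y = funs B f xs"
  have "?Q (funs (Ms n) f xs)" using a by blast
  then have "?Q (SOME y. ?Q y)" by (rule someI)
  then obtain k where k: "set xs \<subseteq> univ (Ms k)" "(SOME y. ?Q y) = funs (Ms k) f xs" by blast
  have "funs (union_chain (range Ms)) f xs = (SOME y. ?Q y)" unfolding union_chain_def by simp
  also have "\<dots> = funs (Ms n) f xs" using k funs_agree_chain[where Ms=Ms, OF ch a(1) k(1) a(2)] by simp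
  finally show ?thesis .
qed

lemma union_chain_fg:
  assumes ch: "\<And>n. substructure A arp arf (Ms n) (Ms (Suc n))"
    and fg: "fin_gen arf (union_chain (range Ms))"
  shows "\<exists>n. univ (Ms (Suc n)) \<subseteq> univ (Ms n)"
proof -
  let ?V = "union_chain (range Ms)"
  have uv: "univ ?V = (\<Union>n. univ (Ms n))" unfolding union_chain_def by simp
  obtain X where X: "finite X" "X \<subseteq> univ ?V" "univ ?V = generated arf ?V X"
    using fg unfolding fin_gen_def by blast
  obtain n where n: "X \<subseteq> univ (Ms n)" using chain_finite[where Ms=Ms, OF ch X(1)] X(2) uv by auto
  have astr: "a_structure A arp arf (Ms n)" using sub_astr1[OF ch[of n]] .
  have "generated arf ?V X \<subseteq> univ (Ms n)"
  proof
    fix x assume "x \<in> generated arf ?V X"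
    then show "x \<in> univ (Ms n)"
    proof induction
      case (gen_base x) then show ?case using n by blast
    next
      case (gen_fun xs f)
      then have s: "set xs \<subseteq> univ (Ms n)" by blast
      show ?case using union_chain_funs[where Ms=Ms, OF ch gen_fun(1) s] astr_funs[OF astr gen_fun(1) s] by simp
    qed
  qed
  then have "univ (Ms (Suc n)) \<subseteq> univ (Ms n)" using X(3) uv by auto
  then show ?thesis by blast
qed

lemma chain_is_chain:
  assumes ch: "\<And>n. substructure A arp arf (Ms n) (Ms (Suc n))"
  shows "is_chain A arp arf (range Ms)"
  unfolding is_chain_def
proof (intro ballI)
  fix B1 B2 assume "B1 \<in> range Ms" "B2 \<in> range Ms"
  then obtain i j where "B1 = Ms i" "B2 = Ms j" by blast
  then show "substructure A arp arf B1 B2 \<or> substructure A arp arf B2 B1"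
    using chain_le[where Ms=Ms, OF ch, of i j] chain_le[where Ms=Ms, OF ch, of j i] nat_le_linear by blast
qed

lemma sub_eq_emb:
  assumes s: "substructure A arp arf M M'" and u: "univ M' \<subseteq> univ M"
  shows "embedding A arp arf id M' M"
proof (rule embI[OF sub_astr2[OF s] sub_astr1[OF s]])
  show "inj_on id (univ M')" by simp
  show "id ` univ M' \<subseteq> univ M" using u by simp
next
  fix f xs assume a: "length xs = arf f" "set xs \<subseteq> univ M'"
  then have "set xs \<subseteq> univ M" using u by blast
  then show "id (funs M' f xs) = funs M f (map id xs)" using sub_funs[OF s a(1)] by simp
next
  fix \<phi> and e :: "nat \<Rightarrow> _" assume a: "wf_qf arp arf \<phi>" "range e \<subseteq> univ M'"
  then have "range e \<subseteq> univ M" using u by blast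
  then show "eval_qf A M (id \<circ> e) \<phi> = eval_qf A M' e \<phi>" using sub_eval[OF s a(1)] by simp
qed

lemma transp_chain:
  assumes j: "inj j" and s: "substructure A arp arf M M'"
  shows "substructure A arp arf (transp M j (inv j)) (transp M' j (inv j))"
proof -
  have gi: "\<And>y. inv j (j y) = y" using j by simp
  have gi1: "\<And>y. y \<in> univ M \<Longrightarrow> inv j (j y) = y" using j by simp
  have gi2: "\<And>y. y \<in> univ M' \<Longrightarrow> inv j (j y) = y" using j by simp
  have M: "a_structure A arp arf M" using sub_astr1[OF s] .
  have M': "a_structure A arp arf M'" using sub_astr2[OF s] .
  note t = transp[where g=j and gi="inv j", OF M gi1] and t' = transp[where g=j and gi="inv j", OF M' gi2]
  show ?thesis
  proof (rule subI[OF t(1) t'(1)])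
    show "univ (transp M j (inv j)) \<subseteq> univ (transp M' j (inv j))"
      using sub_univ[OF s] by auto
  next
    fix f xs assume a: "length xs = arf f" "set xs \<subseteq> univ (transp M j (inv j))"
    then have "length (map (inv j) xs) = arf f" "set (map (inv j) xs) \<subseteq> univ M" using gi by auto
    then show "funs (transp M j (inv j)) f xs = funs (transp M' j (inv j)) f xs"
      using sub_funs[OF s] by simp
  next
    fix \<phi> and e :: "nat \<Rightarrow> _" assume a: "wf_qf arp arf \<phi>" "range e \<subseteq> univ (transp M j (inv j))"
    have r': "range e \<subseteq> univ (transp M' j (inv j))" using a(2) sub_univ[OF s] by auto
    have ri: "range (inv j \<circ> e) \<subseteq> univ M" using a(2) gi by auto
    have "eval_qf A (transp M j (inv j)) e \<phi> = eval_qf A M (inv j \<circ> e) \<phi>"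
      using emb_eval[OF t(2) a] by simp
    also have "\<dots> = eval_qf A M' (inv j \<circ> e) \<phi>" using sub_eval[OF s a(1) ri] .
    also have "\<dots> = eval_qf A (transp M' j (inv j)) e \<phi>" using emb_eval[OF t'(2) a(1) r'] .
    finally show "eval_qf A (transp M j (inv j)) e \<phi> = eval_qf A (transp M' j (inv j)) e \<phi>" .
  qed
qed

lemma sub_into:
  assumes C: "substructure A arp arf C N" and u: "univ C \<subseteq> U" and S: "a_structure A arp arf (N\<lparr>univ := U\<rparr>)"
  shows "substructure A arp arf C (N\<lparr>univ := U\<rparr>)"
proof (rule subI[OF sub_astr1[OF C] S])
  show "univ C \<subseteq> univ (N\<lparr>univ := U\<rparr>)" using u by simp
next
  fix f xs assume "length xs = arf f" "set xs \<subseteq> univ C"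
  then show "funs C f xs = funs (N\<lparr>univ := U\<rparr>) f xs" using sub_funs[OF C] by simp
next
  fix \<phi> and e :: "nat \<Rightarrow> _" assume "wf_qf arp arf \<phi>" "range e \<subseteq> univ C"
  then show "eval_qf A C e \<phi> = eval_qf A (N\<lparr>univ := U\<rparr>) e \<phi>" using sub_eval[OF C] by simp
qed

lemma age_HP:
  assumes eq: "eq_upto_iso A arp arf K (age A arp arf N)"
  shows "HP A arp arf K"
  unfolding HP_def
proof (intro ballI allI impI)
  fix B C assume B: "B \<in> K" and C: "fin_gen arf C \<and> substructure A arp arf C B"
  obtain C' where C': "C' \<in> age A arp arf N" "isomorphic A arp arf B C'"
    using eq B unfolding eq_upto_iso_def by blast
  obtain h where h: "embedding A arp arf h B C'" using iso_emb[OF C'(2)] by blast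
  have C'N: "substructure A arp arf C' N" using C'(1) unfolding age_def by blast
  have k: "embedding A arp arf (id \<circ> (h \<circ> id)) C N"
    using emb_comp[OF emb_comp[OF sub_emb h] sub_emb[OF C'N]] C by blast
  let ?S = "N\<lparr>univ := (id \<circ> (h \<circ> id)) ` univ C\<rparr>"
  have s: "substructure A arp arf ?S N" and i: "isomorphic A arp arf C ?S" using image_sub[OF k] by auto
  have "fin_gen arf ?S" using fin_gen_iso[OF i] C by blast
  then have "?S \<in> age A arp arf N" using s unfolding age_def by blast
  then obtain B' where "B' \<in> K" "isomorphic A arp arf ?S B'" using eq unfolding eq_upto_iso_def by blast
  then show "\<exists>B'\<in>K. isomorphic A arp arf C B'" using iso_trans[OF i] by blast
qed

lemma age_JEP:
  assumes N: "a_structure A arp arf N" and eq: "eq_upto_iso A arp arf K (age A arp arf N)"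
  shows "JEP A arp arf K"
  unfolding JEP_def
proof (intro ballI)
  fix B1 B2 assume B1: "B1 \<in> K" and B2: "B2 \<in> K"
  obtain C1 where C1: "C1 \<in> age A arp arf N" "isomorphic A arp arf B1 C1"
    using eq B1 unfolding eq_upto_iso_def by blast
  obtain C2 where C2: "C2 \<in> age A arp arf N" "isomorphic A arp arf B2 C2"
    using eq B2 unfolding eq_upto_iso_def by blast
  have C1N: "substructure A arp arf C1 N" and fg1: "fin_gen arf C1" using C1(1) unfolding age_def by blast+
  have C2N: "substructure A arp arf C2 N" and fg2: "fin_gen arf C2" using C2(1) unfolding age_def by blast+
  obtain X1 where X1: "finite X1" "X1 \<subseteq> univ C1" "univ C1 = generated arf C1 X1"
    using fg1 unfolding fin_gen_def by blast
  obtain X2 where X2: "finite X2" "X2 \<subseteq> univ C2" "univ C2 = generated arf C2 X2"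
    using fg2 unfolding fin_gen_def by blast
  let ?G = "generated arf N (X1 \<union> X2)"
  let ?S = "N\<lparr>univ := ?G\<rparr>"
  have XN: "X1 \<union> X2 \<subseteq> univ N" using X1(2) X2(2) sub_univ[OF C1N] sub_univ[OF C2N] by blast
  have GN: "?G \<subseteq> univ N" using gen_sub[OF N XN] .
  have gcl: "funs N f xs \<in> ?G" if "length xs = arf f" "set xs \<subseteq> ?G" for f xs
    using that by (intro generated.gen_fun) auto
  have S: "a_structure A arp arf ?S"
  proof (rule astrI)
    fix p xs assume "length xs = arp p" "set xs \<subseteq> univ ?S"
    then show "preds ?S p xs \<in> carrier A" using astr_preds[OF N] GN by auto
  next
    fix f xs assume "length xs = arf f" "set xs \<subseteq> univ ?S"
    then show "funs ?S f xs \<in> univ ?S" using gcl by simp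
  qed
  have SN: "substructure A arp arf ?S N"
    by (rule subI[OF S N]) (use GN in auto)
  have "fin_gen arf ?S"
    unfolding fin_gen_def
    using X1(1) X2(1) generated_univ_upd[where M=N and U="?G" and X="X1 \<union> X2"]
    by (intro exI[of _ "X1 \<union> X2"]) (auto intro: generated.gen_base)
  then have "?S \<in> age A arp arf N" using SN unfolding age_def by blast
  then obtain D where D: "D \<in> K" "isomorphic A arp arf ?S D" using eq unfolding eq_upto_iso_def by blast
  obtain d where d: "embedding A arp arf d ?S D" using iso_emb[OF D(2)] by blast
  have X1G: "X1 \<subseteq> ?G" "X2 \<subseteq> ?G" by (auto intro: generated.gen_base)
  have "univ C1 \<subseteq> ?G" using gen_into[OF C1N X1(3) gcl X1G(1)] by blast
  then have s1: "substructure A arp arf C1 ?S" using sub_into[OF C1N _ S] by blast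
  have "univ C2 \<subseteq> ?G" using gen_into[OF C2N X2(3) gcl X1G(2)] by blast
  then have s2: "substructure A arp arf C2 ?S" using sub_into[OF C2N _ S] by blast
  obtain h1 where h1: "embedding A arp arf h1 B1 C1" using iso_emb[OF C1(2)] by blast
  obtain h2 where h2: "embedding A arp arf h2 B2 C2" using iso_emb[OF C2(2)] by blast
  have "embedding A arp arf (d \<circ> (id \<circ> h1)) B1 D" using emb_comp[OF emb_comp[OF h1 sub_emb[OF s1]] d] .
  moreover have "embedding A arp arf (d \<circ> (id \<circ> h2)) B2 D" using emb_comp[OF emb_comp[OF h2 sub_emb[OF s2]] d] .
  ultimately show "\<exists>D\<in>K. \<exists>h1 h2. embedding A arp arf h1 B1 D \<and> embedding A arp arf h2 B2 D"
    using D(1) by blast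
qed

lemma iso_emb_rev: "isomorphic A arp arf M N \<Longrightarrow> \<exists>h. embedding A arp arf h N M"
  using iso_emb[OF iso_sym] by blast

lemma part1_construct:
  fixes K :: "('m, 'p, 'f, 'a) struct set"
  assumes ne: "K \<noteq> {}" and cnt: "countable_upto_iso A arp arf K"
    and KB: "\<forall>B\<in>K. a_structure A arp arf B \<and> fin_gen arf B"
    and hp: "HP A arp arf K" and jep: "JEP A arp arf K"
  shows "\<exists>N :: ('m \<times> nat, 'p, 'f, 'a) struct.
          a_structure A arp arf N \<and> eq_upto_iso A arp arf K (age A arp arf N)"
proof -
  obtain K0 where K0: "K0 \<subseteq> K" "countable K0" "\<forall>B\<in>K. \<exists>B0\<in>K0. isomorphic A arp arf B B0"
    using cnt unfolding countable_upto_iso_def by blast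
  have K0ne: "K0 \<noteq> {}" using K0(3) ne by blast
  define en where "en = from_nat_into K0"
  have enK: "en n \<in> K" for n using from_nat_into[OF K0ne] K0(1) unfolding en_def by blast
  have ensurj: "\<exists>n. en n = B0" if "B0 \<in> K0" for B0
    using from_nat_into_surj[OF K0(2) that] unfolding en_def by blast
  define P where "P n M \<longleftrightarrow> a_structure A arp arf M \<and> (\<forall>z\<in>univ M. snd z \<le> n) \<and>
      (\<exists>E\<in>K. isomorphic A arp arf M E) \<and> (\<exists>h. embedding A arp arf h (en n) M)"
    for n and M :: "('m \<times> nat, 'p, 'f, 'a) struct"
  have P0: "\<exists>M. P 0 M"
  proof -
    obtain M :: "('m \<times> nat, 'p, 'f, 'a) struct" where M: "\<forall>z\<in>univ M. snd z \<le> 0" "isomorphic A arp arf M (en 0)"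
      using start[of A arp arf "en 0"] KB enK by blast
    have "P 0 M" unfolding P_def using M enK iso_astr1[OF M(2)] iso_emb_rev[OF M(2)] by blast
    then show ?thesis by blast
  qed
  have PS: "\<exists>M'. P (Suc n) M' \<and> substructure A arp arf M M'" if pm: "P n M" for n M
  proof -
    obtain E where E: "E \<in> K" "isomorphic A arp arf M E" using pm unfolding P_def by blast
    have tg: "\<forall>z\<in>univ M. snd z \<le> n" using pm unfolding P_def by blast
    obtain \<phi> where \<phi>: "embedding A arp arf \<phi> M E" using iso_emb[OF E(2)] by blast
    obtain D h1 h2 where D: "D \<in> K" "embedding A arp arf h1 E D" "embedding A arp arf h2 (en (Suc n)) D"
      using jep E(1) enK unfolding JEP_def by blast
    obtain M' where M': "substructure A arp arf M M'" "\<forall>z\<in>univ M'. snd z \<le> Suc n" "isomorphic A arp arf M' D"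
      using extend[OF tg emb_comp[OF \<phi> D(2)]] by blast
    obtain \<psi> where \<psi>: "embedding A arp arf \<psi> D M'" using iso_emb_rev[OF M'(3)] by blast
    have "P (Suc n) M'" unfolding P_def
      using M' D(1) sub_astr2[OF M'(1)] emb_comp[OF D(3) \<psi>] by blast
    then show ?thesis using M'(1) by blast
  qed
  obtain Ms where Ms: "\<forall>n. P n (Ms n) \<and> substructure A arp arf (Ms n) (Ms (Suc n))"
    using dep_chain[where P=P and R="substructure A arp arf", OF P0 PS] by blast
  have ch: "\<And>n. substructure A arp arf (Ms n) (Ms (Suc n))" using Ms by blast
  let ?N = "unionc Ms"
  have sN: "substructure A arp arf (Ms n) ?N" for n using unionc_sub[where Ms=Ms, OF ch] .
  have N: "a_structure A arp arf ?N" using sub_astr2[OF sN[of 0]] .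
  have "eq_upto_iso A arp arf K (age A arp arf ?N)"
  proof (rule age_lemma[OF N])
    show "\<forall>B\<in>K. fin_gen arf B \<and> (\<exists>h. embedding A arp arf h B ?N)"
    proof
      fix B assume B: "B \<in> K"
      obtain B0 where B0: "B0 \<in> K0" "isomorphic A arp arf B B0" using K0(3) B by blast
      obtain n where n: "en n = B0" using ensurj[OF B0(1)] by blast
      obtain h where h: "embedding A arp arf h B B0" using iso_emb[OF B0(2)] by blast
      obtain k where k: "embedding A arp arf k (en n) (Ms n)" using Ms unfolding P_def by blast
      have "embedding A arp arf (id \<circ> (k \<circ> h)) B ?N"
        using emb_comp[OF emb_comp[OF h] sub_emb[OF sN]] k n by blast
      then show "fin_gen arf B \<and> (\<exists>h. embedding A arp arf h B ?N)" using KB B by blast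
    qed
    show "\<forall>C. fin_gen arf C \<and> substructure A arp arf C ?N \<longrightarrow> (\<exists>B'\<in>K. isomorphic A arp arf C B')"
    proof (intro allI impI)
      fix C assume C: "fin_gen arf C \<and> substructure A arp arf C ?N"
      then obtain n where n: "substructure A arp arf C (Ms n)" using unionc_fg[where Ms=Ms, OF ch] by blast
      obtain E where E: "E \<in> K" "isomorphic A arp arf (Ms n) E" using Ms unfolding P_def by blast
      obtain \<phi> where \<phi>: "embedding A arp arf \<phi> (Ms n) E" using iso_emb[OF E(2)] by blast
      show "\<exists>B'\<in>K. isomorphic A arp arf C B'"
        using HP_emb[OF hp E(1) emb_comp[OF sub_emb[OF n] \<phi>]] C by blast
    qed
  qed
  then show ?thesis using N by blast
qed

lemma max_exists:
  fixes K :: "('m, 'p, 'f, 'a) struct set"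
  assumes ne: "K \<noteq> {}" and KB: "\<forall>B\<in>K. a_structure A arp arf B \<and> fin_gen arf B"
    and jep: "JEP A arp arf K" and cl: "closed_under_chains A arp arf K"
  shows "\<exists>Mx\<in>K. \<forall>B\<in>K. \<exists>h. embedding A arp arf h B Mx"
proof (rule ccontr)
  assume no: "\<not> (\<exists>Mx\<in>K. \<forall>B\<in>K. \<exists>h. embedding A arp arf h B Mx)"
  have step: "\<exists>D\<in>K. (\<exists>h. embedding A arp arf h E D) \<and> \<not> (\<exists>h. embedding A arp arf h D E)"
    if E: "E \<in> K" for E
  proof -
    obtain B where B: "B \<in> K" "\<not> (\<exists>h. embedding A arp arf h B E)" using no E by blast
    obtain D k1 k2 where D: "D \<in> K" "embedding A arp arf k1 E D" "embedding A arp arf k2 B D"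
      using jep E B(1) unfolding JEP_def by blast
    have "\<not> (\<exists>h. embedding A arp arf h D E)"
    proof
      assume "\<exists>h. embedding A arp arf h D E"
      then obtain g where "embedding A arp arf g D E" by blast
      then have "embedding A arp arf (g \<circ> k2) B E" using emb_comp[OF D(3)] by blast
      then show False using B(2) by blast
    qed
    then show ?thesis using D by blast
  qed
  define P where "P n M \<longleftrightarrow> a_structure A arp arf M \<and> (\<forall>z\<in>univ M. snd z \<le> n) \<and>
      (\<exists>E\<in>K. isomorphic A arp arf M E)"
    for n and M :: "('m \<times> nat, 'p, 'f, 'a) struct"
  define R where "R M M' \<longleftrightarrow> substructure A arp arf M M' \<and> \<not> (\<exists>h. embedding A arp arf h M' M)"
    for M M' :: "('m \<times> nat, 'p, 'f, 'a) struct"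
  have P0: "\<exists>M. P 0 M"
  proof -
    obtain B where B: "B \<in> K" using ne by blast
    obtain M :: "('m \<times> nat, 'p, 'f, 'a) struct" where M: "\<forall>z\<in>univ M. snd z \<le> 0" "isomorphic A arp arf M B"
      using start[of A arp arf B] KB B by blast
    have "P 0 M" unfolding P_def using M B iso_astr1[OF M(2)] by blast
    then show ?thesis by blast
  qed
  have PS: "\<exists>M'. P (Suc n) M' \<and> R M M'" if pm: "P n M" for n M
  proof -
    obtain E where E: "E \<in> K" "isomorphic A arp arf M E" using pm unfolding P_def by blast
    have tg: "\<forall>z\<in>univ M. snd z \<le> n" using pm unfolding P_def by blast
    obtain \<phi> where \<phi>: "embedding A arp arf \<phi> M E" using iso_emb[OF E(2)] by blast
    obtain D where D: "D \<in> K" "\<exists>h. embedding A arp arf h E D" "\<not> (\<exists>h. embedding A arp arf h D E)"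
      using step[OF E(1)] by blast
    obtain k where k: "embedding A arp arf k E D" using D(2) by blast
    obtain M' where M': "substructure A arp arf M M'" "\<forall>z\<in>univ M'. snd z \<le> Suc n" "isomorphic A arp arf M' D"
      using extend[OF tg emb_comp[OF \<phi> k]] by blast
    obtain \<psi> where \<psi>: "embedding A arp arf \<psi> D M'" using iso_emb_rev[OF M'(3)] by blast
    have ne': "\<not> (\<exists>h. embedding A arp arf h M' M)"
    proof
      assume "\<exists>h. embedding A arp arf h M' M"
      then obtain g where g: "embedding A arp arf g M' M" by blast
      have "embedding A arp arf (\<phi> \<circ> (g \<circ> \<psi>)) D E" using emb_comp[OF emb_comp[OF \<psi> g] \<phi>] .
      then show False using D(3) by blast
    qed
    have "P (Suc n) M'" unfolding P_def using M' D(1) sub_astr2[OF M'(1)] by blast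
    then show ?thesis using M'(1) ne' unfolding R_def by blast
  qed
  obtain Ms where Ms: "\<forall>n. P n (Ms n) \<and> R (Ms n) (Ms (Suc n))"
    using dep_chain[where P=P and R=R, OF P0 PS] by blast
  have ch: "\<And>n. substructure A arp arf (Ms n) (Ms (Suc n))" using Ms unfolding R_def by blast
  have nemb: "\<And>n. \<not> (\<exists>h. embedding A arp arf h (Ms (Suc n)) (Ms n))" using Ms unfolding R_def by blast
  have isoK: "\<And>n. \<exists>E\<in>K. isomorphic A arp arf (Ms n) E" using Ms unfolding P_def by blast
  have strict: "\<not> univ (Ms (Suc n)) \<subseteq> univ (Ms n)" for n
    using sub_eq_emb[OF ch[of n]] nemb[of n] by blast
  show False
  proof (cases "finite (UNIV :: 'm set)")
    case True
    have fc: "finite (univ (Ms n)) \<and> card (univ (Ms n)) \<le> card (UNIV :: 'm set)" for n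
    proof -
      obtain E where E: "E \<in> K" "isomorphic A arp arf (Ms n) E" using isoK by blast
      obtain h where h: "embedding A arp arf h (Ms n) E" using iso_emb[OF E(2)] by blast
      have inj: "inj_on h (univ (Ms n))" using emb_inj[OF h] .
      have "h ` univ (Ms n) \<subseteq> (UNIV :: 'm set)" by simp
      then have "finite (h ` univ (Ms n))" using True by (rule finite_subset)
      then have "finite (univ (Ms n))" by (rule finite_imageD[OF _ inj])
      moreover have "card (univ (Ms n)) \<le> card (UNIV :: 'm set)"
        by (rule card_inj_on_le[OF inj subset_UNIV True])
      ultimately show ?thesis by blast
    qed
    have grow: "n \<le> card (univ (Ms n))" for n
    proof (induction n)
      case 0 then show ?case by simp
    next
      case (Suc n)
      have "univ (Ms n) \<subset> univ (Ms (Suc n))" using sub_univ[OF ch[of n]] strict[of n] by blast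
      then have "card (univ (Ms n)) < card (univ (Ms (Suc n)))"
        using fc[of "Suc n"] by (intro psubset_card_mono) auto
      then show ?case using Suc by simp
    qed
    show False using grow[of "Suc (card (UNIV :: 'm set))"] fc[of "Suc (card (UNIV :: 'm set))"] by simp
  next
    case False
    obtain j :: "'m \<times> nat \<Rightarrow> 'm" where j: "inj j" using inj_prod_nat[OF False] by blast
    have gi: "\<And>y. y \<in> univ (Ms n) \<Longrightarrow> inv j (j y) = y" for n using j by simp
    define T where "T n = transp (Ms n) j (inv j)" for n
    have tT: "embedding A arp arf (inv j) (T n) (Ms n)" "isomorphic A arp arf (T n) (Ms n)" for n
      unfolding T_def using transp[where g=j and gi="inv j", OF sub_astr1[OF ch[of n]] gi[of _ n]] by blast+
    have chT: "\<And>n. substructure A arp arf (T n) (T (Suc n))" unfolding T_def using transp_chain[OF j ch] .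
    have TK: "\<forall>B\<in>range T. \<exists>B'\<in>K. isomorphic A arp arf B B'"
    proof
      fix B assume "B \<in> range T"
      then obtain n where n: "B = T n" by blast
      obtain E where E: "E \<in> K" "isomorphic A arp arf (Ms n) E" using isoK by blast
      show "\<exists>B'\<in>K. isomorphic A arp arf B B'" using iso_trans[OF tT(2) E(2)] E(1) n by blast
    qed
    have "range T \<noteq> {}" by blast
    moreover have "is_chain A arp arf (range T)" using chain_is_chain[where Ms=T, OF chT] .
    ultimately obtain B' where B': "B' \<in> K" "isomorphic A arp arf (union_chain (range T)) B'"
      using cl TK unfolding closed_under_chains_def by blast
    have "fin_gen arf B'" using KB B'(1) by blast
    then have "fin_gen arf (union_chain (range T))" using fin_gen_iso[OF iso_sym[OF B'(2)]] by blast
    then obtain n where n: "univ (T (Suc n)) \<subseteq> univ (T n)" using union_chain_fg[where Ms=T, OF chT] by blast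
    have e1: "embedding A arp arf id (T (Suc n)) (T n)" using sub_eq_emb[OF chT n] .
    obtain \<psi> where \<psi>: "embedding A arp arf \<psi> (Ms (Suc n)) (T (Suc n))" using iso_emb_rev[OF tT(2)] by blast
    have "embedding A arp arf (inv j \<circ> (id \<circ> \<psi>)) (Ms (Suc n)) (Ms n)"
      using emb_comp[OF emb_comp[OF \<psi> e1] tT(1)] .
    then show False using nemb by blast
  qed
qed

lemma part2_construct:
  fixes K :: "('m, 'p, 'f, 'a) struct set"
  assumes ne: "K \<noteq> {}" and KB: "\<forall>B\<in>K. a_structure A arp arf B \<and> fin_gen arf B"
    and hp: "HP A arp arf K" and jep: "JEP A arp arf K" and cl: "closed_under_chains A arp arf K"
  shows "\<exists>N :: ('m \<times> nat, 'p, 'f, 'a) struct.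
          a_structure A arp arf N \<and> eq_upto_iso A arp arf K (age A arp arf N)"
proof -
  obtain Mx where Mx: "Mx \<in> K" "\<forall>B\<in>K. \<exists>h. embedding A arp arf h B Mx"
    using max_exists[OF ne KB jep cl] by blast
  obtain N :: "('m \<times> nat, 'p, 'f, 'a) struct" where N: "isomorphic A arp arf N Mx"
    using start[of A arp arf Mx] KB Mx(1) by blast
  have Na: "a_structure A arp arf N" using iso_astr1[OF N] .
  obtain \<phi> where \<phi>: "embedding A arp arf \<phi> N Mx" using iso_emb[OF N] by blast
  obtain \<psi> where \<psi>: "embedding A arp arf \<psi> Mx N" using iso_emb_rev[OF N] by blast
  have "eq_upto_iso A arp arf K (age A arp arf N)"
  proof (rule age_lemma[OF Na])
    show "\<forall>B\<in>K. fin_gen arf B \<and> (\<exists>h. embedding A arp arf h B N)"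
    proof
      fix B assume B: "B \<in> K"
      obtain h where h: "embedding A arp arf h B Mx" using Mx(2) B by blast
      show "fin_gen arf B \<and> (\<exists>h. embedding A arp arf h B N)"
        using KB B emb_comp[OF h \<psi>] by blast
    qed
    show "\<forall>C. fin_gen arf C \<and> substructure A arp arf C N \<longrightarrow> (\<exists>B'\<in>K. isomorphic A arp arf C B')"
    proof (intro allI impI)
      fix C assume C: "fin_gen arf C \<and> substructure A arp arf C N"
      then have "embedding A arp arf (\<phi> \<circ> id) C Mx" using emb_comp[OF sub_emb \<phi>] by blast
      then show "\<exists>B'\<in>K. isomorphic A arp arf C B'" using HP_emb[OF hp Mx(1)] C by blast
    qed
  qed
  then show ?thesis using Na by blast
qed

theorem theorem1:
  fixes A :: "'a ul_alg" and arp :: "'p \<Rightarrow> nat" and arf :: "'f \<Rightarrow> nat"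
    and K :: "('m, 'p, 'f, 'a) struct set"
  assumes "ul_chain A"
  shows
    "(K \<noteq> {} \<and> countable_upto_iso A arp arf K \<and>
      (\<forall>B\<in>K. a_structure A arp arf B \<and> fin_gen arf B) \<longrightarrow>
      ((\<exists>N :: ('m \<times> nat, 'p, 'f, 'a) struct.
          a_structure A arp arf N \<and> eq_upto_iso A arp arf K (age A arp arf N))
       \<longleftrightarrow> HP A arp arf K \<and> JEP A arp arf K))
   \<and>
    (K \<noteq> {} \<and> (\<forall>B\<in>K. a_structure A arp arf B \<and> fin_gen arf B) \<and>
      HP A arp arf K \<and> JEP A arp arf K \<and> closed_under_chains A arp arf K \<longrightarrow>
      (\<exists>N :: ('m \<times> nat, 'p, 'f, 'a) struct.
          a_structure A arp arf N \<and> eq_upto_iso A arp arf K (age A arp arf N)))"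
proof (intro conjI impI)
  assume H: "K \<noteq> {} \<and> countable_upto_iso A arp arf K \<and> (\<forall>B\<in>K. a_structure A arp arf B \<and> fin_gen arf B)"
  show "(\<exists>N :: ('m \<times> nat, 'p, 'f, 'a) struct.
          a_structure A arp arf N \<and> eq_upto_iso A arp arf K (age A arp arf N))
       \<longleftrightarrow> HP A arp arf K \<and> JEP A arp arf K"
  proof
    assume "\<exists>N :: ('m \<times> nat, 'p, 'f, 'a) struct.
          a_structure A arp arf N \<and> eq_upto_iso A arp arf K (age A arp arf N)"
    then obtain N :: "('m \<times> nat, 'p, 'f, 'a) struct"
      where N: "a_structure A arp arf N" "eq_upto_iso A arp arf K (age A arp arf N)" by blast
    show "HP A arp arf K \<and> JEP A arp arf K" using age_HP[OF N(2)] age_JEP[OF N] by blast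
  next
    assume "HP A arp arf K \<and> JEP A arp arf K"
    then show "\<exists>N :: ('m \<times> nat, 'p, 'f, 'a) struct.
          a_structure A arp arf N \<and> eq_upto_iso A arp arf K (age A arp arf N)"
      using part1_construct H by blast
  qed
next
  assume "K \<noteq> {} \<and> (\<forall>B\<in>K. a_structure A arp arf B \<and> fin_gen arf B) \<and>
      HP A arp arf K \<and> JEP A arp arf K \<and> closed_under_chains A arp arf K"
  then show "\<exists>N :: ('m \<times> nat, 'p, 'f, 'a) struct.
          a_structure A arp arf N \<and> eq_upto_iso A arp arf K (age A arp arf N)"
    using part2_construct by blast
qed

end
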